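(* Let $\mathcal{H}$ be a finite-dimensional Hilbert space, $H_0$ a Hermitian operator with ground energy $E_0$, ground-space projection $P_0$ and $Q_0=I-P_0$, and $V$ a Hermitian operator. Let $G=Q_0(E_0I-H_0)^{-1}Q_0$ (inverse taken on the range of $Q_0$). Let $L\geq 2$ be an integer such that for every $n<L$ and all choices $Z_1,\dots,Z_{n-1}\in\{P_0,Q_0\}\cup\{G^m: m\in\mathbb{N}\}$, one has $P_0VZ_1VZ_2\cdots Z_{n-1}VP_0\in\mathbb{C}P_0$ (equivalently, $P_0\Gamma(n)P_0\subseteq\mathbb{C}P_0$ for all $n<L$, with $\Gamma(n)$ as in the context). Then the Schrieffer–Wolff effective Hamiltonian coefficients satisfy $H_{\mathrm{eff},1}=P_0VP_0\in\mathbb{C}P_0$ and $H_{\mathrm{eff},q}\in\mathbb{C}P_0$ for all $2\le q<L$ (so the effective Hamiltonian $H_{\mathrm{eff}}^{(n)}=E_0P_0+\sum_{q=1}^n\epsilon^qH_{\mathrm{eff},q}$ is proportional to $P_0$ for all $n<L$), and $$H_{\mathrm{eff},L}\in P_0(VG)^{L-1}VP_0+\mathbb{C}P_0,$$ where $(VG)^{L-1}V$ contains $L$ factors of $V$.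
   Context: Notation. $\Gamma(n)$ is the linear span of operators $Z_0VZ_1V\cdots Z_{n-1}VZ_n$ with each $Z_j\in\{P_0,Q_0\}\cup\{G^m:m\in\mathbb{N}\}$. Set $V_{\mathrm d}=P_0VP_0+Q_0VQ_0$, $V_{\mathrm{od}}=P_0VQ_0+Q_0VP_0$, $\mathcal{L}(X)=P_0XG-GXP_0$, $\mathrm{ad}_S(X)=[S,X]$. Let $\beta_m$ be the Bernoulli numbers ($\beta_2=1/6$), $a_m=2^m\beta_m/m!$, and $b_{2n-1}=2(2^{2n}-1)\beta_{2n}/(2n)!$ (so $b_1=1/2$). Define recursively $S_1=\mathcal{L}(V_{\mathrm{od}})$, $S_2=-\mathcal{L}(\mathrm{ad}_{V_{\mathrm d}}(S_1))$, and for $n\ge 3$, $S_n=-\mathcal{L}(\mathrm{ad}_{V_{\mathrm d}}(S_{n-1}))+\sum_{j\ge1}a_{2j}\mathcal{L}(\hat S^{2j}(V_{\mathrm{od}})_{n-1})$, where $\hat S^k(V_{\mathrm{od}})_m=\sum_{n_1,\dots,n_k\ge1,\ \sum_r n_r=m}\mathrm{ad}_{S_{n_1}}\cdots\mathrm{ad}_{S_{n_k}}(V_{\mathrm{od}})$ (which is $0$ if $k>m$). The Schrieffer–Wolff effective Hamiltonian expansion is $H_{\mathrm{eff}}^{(n)}=H_0P_0+\epsilon P_0VP_0+\sum_{q=2}^n\epsilon^qH_{\mathrm{eff},q}$ with $H_{\mathrm{eff},1}=P_0VP_0$ and $H_{\mathrm{eff},q}=\sum_{1\le j\le\lfloor q/2\rfloor}b_{2j-1}P_0\hat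 S^{2j-1}(V_{\mathrm{od}})_{q-1}P_0$ for $q\ge2$. *)

theory Defs
  imports "Jordan_Normal_Form.Schur_Decomposition" "Jordan_Normal_Form.Char_Poly"
begin

definition hermitian_mat :: "complex mat \<Rightarrow> bool" where
  "hermitian_mat A \<longleftrightarrow> A \<in> carrier_mat (dim_row A) (dim_row A) \<and> mat_adjoint A = A"

definition ground_energy :: "complex mat \<Rightarrow> real" where
  "ground_energy H = (THE E. eigenvalue H (complex_of_real E) \<and> (\<forall>k. eigenvalue H k \<longrightarrow> E \<le> Re k))"

definition ground_proj :: "complex mat \<Rightarrow> complex mat" where
  "ground_proj H = (THE P. P \<in> carrier_mat (dim_row H) (dim_row H) \<and> P * P = P \<and> mat_adjoint P = P \<and>
     (\<forall>v \<in> carrier_vec (dim_row H).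
        P *\<^sub>v v = v \<longleftrightarrow> H *\<^sub>v v = complex_of_real (ground_energy H) \<cdot>\<^sub>v v))"

definition compl_proj :: "complex mat \<Rightarrow> complex mat" where
  "compl_proj H = 1\<^sub>m (dim_row H) - ground_proj H"

text \<open>Reduced resolvent G = Q0 (E0 I - H0)^{-1} Q0, the inverse being taken on range Q0
  (G vanishes on range P0).\<close>
definition reduced_resolvent :: "complex mat \<Rightarrow> complex mat" where
  "reduced_resolvent H = (THE G. G \<in> carrier_mat (dim_row H) (dim_row H) \<and>
     G * ground_proj H = 0\<^sub>m (dim_row H) (dim_row H) \<and>
     ground_proj H * G = 0\<^sub>m (dim_row H) (dim_row H) \<and>
     G * (complex_of_real (ground_energy H) \<cdot>\<^sub>m 1\<^sub>m (dim_row H) - H) = compl_proj H)"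

section \<open>Bernoulli numbers (convention B_1 = -1/2, B_2 = 1/6)\<close>

fun bernoulli :: "nat \<Rightarrow> real" where
  "bernoulli n = (if n = 0 then 1
     else - (\<Sum>k<n. real ((n + 1) choose k) * bernoulli k) / real (n + 1))"

definition sw_a :: "nat \<Rightarrow> real" where
  "sw_a m = 2 ^ m * bernoulli m / fact m"

text \<open>sw_b n is b_{2n-1} = 2 (2^{2n} - 1) B_{2n} / (2n)!\<close>
definition sw_b :: "nat \<Rightarrow> real" where
  "sw_b n = 2 * (2 ^ (2 * n) - 1) * bernoulli (2 * n) / fact (2 * n)"

definition msum :: "nat \<Rightarrow> (nat \<Rightarrow> complex mat) \<Rightarrow> nat list \<Rightarrow> complex mat" where
  "msum d f xs = foldr (\<lambda>i acc. f i + acc) xs (0\<^sub>m d d)"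

definition ad :: "complex mat \<Rightarrow> complex mat \<Rightarrow> complex mat" where
  "ad S X = S * X - X * S"

definition Lop :: "complex mat \<Rightarrow> complex mat \<Rightarrow> complex mat \<Rightarrow> complex mat" where
  "Lop P G X = P * X * G - G * X * P"

text \<open>hatS d S W k m = sum over n_1,...,n_k >= 1 with n_1+...+n_k = m of
  ad_{S n_1} ... ad_{S n_k} W.\<close>
fun hatS :: "nat \<Rightarrow> (nat \<Rightarrow> complex mat) \<Rightarrow> complex mat \<Rightarrow> nat \<Rightarrow> nat \<Rightarrow> complex mat" where
  "hatS d S W 0 m = (if m = 0 then W else 0\<^sub>m d d)"
| "hatS d S W (Suc k) m = msum d (\<lambda>n1. ad (S n1) (hatS d S W k (m - n1))) [1..<m+1]"

definition V_diag :: "complex mat \<Rightarrow> complex mat \<Rightarrow> complex mat" where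
  "V_diag H V = ground_proj H * V * ground_proj H + compl_proj H * V * compl_proj H"

definition V_offdiag :: "complex mat \<Rightarrow> complex mat \<Rightarrow> complex mat" where
  "V_offdiag H V = ground_proj H * V * compl_proj H + compl_proj H * V * ground_proj H"

text \<open>For n = 2 the Bernoulli sum
  vanishes identically (hatS^{2j}(V_od)_1 = 0), so one formula covers n >= 2.
  The sum over j >= 1 is restricted to 2j <= n-1, since hatS^k(V_od)_m = 0 for k > m.\<close>
definition S_next :: "complex mat \<Rightarrow> complex mat \<Rightarrow> (nat \<Rightarrow> complex mat) \<Rightarrow> nat \<Rightarrow> complex mat" where
  "S_next H V S n =
    (let d = dim_row H; P = ground_proj H; G = reduced_resolvent H;
         Vd = V_diag H V; Vod = V_offdiag H V in
     if n = 1 then Lop P G Vod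
     else - Lop P G (ad Vd (S (n - 1)))
          + msum d (\<lambda>j. complex_of_real (sw_a (2 * j)) \<cdot>\<^sub>m Lop P G (hatS d S Vod (2 * j) (n - 1)))
              [1..<(n - 1) div 2 + 1])"

text \<open>List [S_0 (dummy), S_1, ..., S_n].\<close>
primrec S_list :: "complex mat \<Rightarrow> complex mat \<Rightarrow> nat \<Rightarrow> complex mat list" where
  "S_list H V 0 = [0\<^sub>m (dim_row H) (dim_row H)]"
| "S_list H V (Suc n) = S_list H V n @ [S_next H V (\<lambda>i. S_list H V n ! i) (Suc n)]"

definition SW_S :: "complex mat \<Rightarrow> complex mat \<Rightarrow> nat \<Rightarrow> complex mat" where
  "SW_S H V n = S_list H V n ! n"

definition H_eff :: "complex mat \<Rightarrow> complex mat \<Rightarrow> nat \<Rightarrow> complex mat" where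
  "H_eff H V q =
    (if q = 1 then ground_proj H * V * ground_proj H
     else msum (dim_row H)
       (\<lambda>j. complex_of_real (sw_b j) \<cdot>\<^sub>m
            (ground_proj H * hatS (dim_row H) (SW_S H V) (V_offdiag H V) (2 * j - 1) (q - 1) * ground_proj H))
       [1..<q div 2 + 1])"

definition in_span_P :: "complex mat \<Rightarrow> complex mat \<Rightarrow> bool" where
  "in_span_P P X \<longleftrightarrow> (\<exists>c. X = c \<cdot>\<^sub>m P)"

definition V_chain :: "complex mat \<Rightarrow> complex mat \<Rightarrow> complex mat list \<Rightarrow> complex mat" where
  "V_chain P V Zs = foldl (\<lambda>acc Z. acc * Z * V) (P * V) Zs * P"

definition Z_choices :: "complex mat \<Rightarrow> complex mat set" where
  "Z_choices H = {ground_proj H, compl_proj H} \<union> {reduced_resolvent H ^\<^sub>m m | m. True}"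

end

theory Submission
  imports Defs "Jordan_Normal_Form.Matrix_Kernel"
begin


inductive_set lspan :: "nat \<Rightarrow> complex mat set \<Rightarrow> complex mat set" for d S where
  lspan_zero: "0\<^sub>m d d \<in> lspan d S"
| lspan_base: "x \<in> S \<Longrightarrow> x \<in> lspan d S"
| lspan_add: "x \<in> lspan d S \<Longrightarrow> y \<in> lspan d S \<Longrightarrow> x + y \<in> lspan d S"
| lspan_smult: "x \<in> lspan d S \<Longrightarrow> c \<cdot>\<^sub>m x \<in> lspan d S"

lemma lspan_carrier: assumes "S \<subseteq> carrier_mat d d" "x \<in> lspan d S" shows "x \<in> carrier_mat d d"
  using assms(2) by (induction rule: lspan.induct) (use assms(1) in auto)

lemma lspan_uminus: assumes "S \<subseteq> carrier_mat d d" "x \<in> lspan d S" shows "- x \<in> lspan d S"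
proof -
  have x: "x \<in> carrier_mat d d" using lspan_carrier assms by blast
  have "- x = (-1) \<cdot>\<^sub>m x" using x by (intro eq_matI) auto
  thus ?thesis using assms by (simp add: lspan_smult)
qed

lemma lspan_minus: assumes "S \<subseteq> carrier_mat d d" "x \<in> lspan d S" "y \<in> lspan d S" shows "x - y \<in> lspan d S"
proof -
  have x: "x \<in> carrier_mat d d" "y \<in> carrier_mat d d" using lspan_carrier assms by blast+
  have "x - y = x + (-1) \<cdot>\<^sub>m y" using x by (intro eq_matI) auto
  thus ?thesis using assms by (simp add: lspan_smult lspan_add)
qed

lemma lspan_subset: assumes "S \<subseteq> lspan d T" "x \<in> lspan d S" shows "x \<in> lspan d T"
  using assms(2) by (induction rule: lspan.induct) (use assms(1) in \<open>auto intro: lspan.intros\<close>)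

lemma lspan_idem: "x \<in> lspan d (lspan d S) \<Longrightarrow> x \<in> lspan d S"
  using lspan_subset by blast

lemma lspan_map:
  assumes S: "S \<subseteq> carrier_mat d d"
    and add: "\<And>x y. x \<in> carrier_mat d d \<Longrightarrow> y \<in> carrier_mat d d \<Longrightarrow> f (x + y) = f x + f y"
    and sm: "\<And>c x. x \<in> carrier_mat d d \<Longrightarrow> f (c \<cdot>\<^sub>m x) = c \<cdot>\<^sub>m f x"
    and z: "f (0\<^sub>m d d) \<in> lspan d T"
    and gen: "\<And>s. s \<in> S \<Longrightarrow> f s \<in> lspan d T"
    and x: "x \<in> lspan d S"
  shows "f x \<in> lspan d T"
proof -
  have "x \<in> carrier_mat d d \<and> f x \<in> lspan d T" using x
  proof (induction rule: lspan.induct)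
    case lspan_zero then show ?case using z by auto
  next
    case (lspan_base x) then show ?case using gen S by auto
  next
    case (lspan_add x y) then show ?case using add by (auto intro: lspan.intros)
  next
    case (lspan_smult x c) then show ?case using sm by (auto intro: lspan.intros)
  qed
  thus ?thesis by auto
qed

lemma lspan_sandwich:
  assumes S: "S \<subseteq> carrier_mat d d" and A: "A \<in> carrier_mat d d" and B: "B \<in> carrier_mat d d"
    and gen: "\<And>s. s \<in> S \<Longrightarrow> A * s * B \<in> lspan d T"
    and x: "x \<in> lspan d S"
  shows "A * x * B \<in> lspan d T"
proof (rule lspan_map[where f="\<lambda>x. A * x * B", OF S _ _ _ gen x])
  fix x y :: "complex mat" assume xy: "x \<in> carrier_mat d d" "y \<in> carrier_mat d d"
  show "A * (x + y) * B = A * x * B + A * y * B"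
    using xy A B by (simp add: mult_add_distrib_mat[of _ d d] add_mult_distrib_mat[of _ d d])
next
  fix c :: complex and x :: "complex mat" assume x: "x \<in> carrier_mat d d"
  show "A * (c \<cdot>\<^sub>m x) * B = c \<cdot>\<^sub>m (A * x * B)"
    using x A B by (simp add: mult_smult_distrib[of _ d d] mult_smult_assoc_mat[of _ d d])
next
  have "A * 0\<^sub>m d d * B = 0\<^sub>m d d" using A B by simp
  then show "A * 0\<^sub>m d d * B \<in> lspan d T" by (simp add: lspan_zero)
qed

lemma lspan_mult_left:
  assumes "S \<subseteq> carrier_mat d d" "A \<in> carrier_mat d d"
    "\<And>s. s \<in> S \<Longrightarrow> A * s \<in> lspan d T" "x \<in> lspan d S"
  shows "A * x \<in> lspan d T"
proof -
  have x: "x \<in> carrier_mat d d" using assms lspan_carrier by blast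
  have "A * x * 1\<^sub>m d \<in> lspan d T"
    by (rule lspan_sandwich[OF assms(1,2) one_carrier_mat _ assms(4)])
       (use assms in \<open>auto\<close>)
  thus ?thesis using x assms by simp
qed

lemma lspan_mult_right:
  assumes "S \<subseteq> carrier_mat d d" "B \<in> carrier_mat d d"
    "\<And>s. s \<in> S \<Longrightarrow> s * B \<in> lspan d T" "x \<in> lspan d S"
  shows "x * B \<in> lspan d T"
proof -
  have x: "x \<in> carrier_mat d d" using assms lspan_carrier by blast
  have "1\<^sub>m d * x * B \<in> lspan d T"
    by (rule lspan_sandwich[OF assms(1) one_carrier_mat assms(2) _ assms(4)])
       (use assms in \<open>auto\<close>)
  thus ?thesis using x assms by simp
qed

lemma lspan_mult2:
  assumes "S \<subseteq> carrier_mat d d" "T \<subseteq> carrier_mat d d"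
    "\<And>s t. s \<in> S \<Longrightarrow> t \<in> T \<Longrightarrow> s * t \<in> lspan d U" "x \<in> lspan d S" "y \<in> lspan d T"
  shows "x * y \<in> lspan d U"
proof -
  have y: "y \<in> carrier_mat d d" using assms lspan_carrier by blast
  show ?thesis
  proof (rule lspan_mult_right[OF assms(1) y _ assms(4)])
    fix s assume "s \<in> S"
    then show "s * y \<in> lspan d U"
      using assms by (intro lspan_mult_left[OF assms(2) _ _ assms(5)]) auto
  qed
qed

lemma msum_lspan: "(\<And>x. x \<in> set xs \<Longrightarrow> f x \<in> lspan d T) \<Longrightarrow> msum d f xs \<in> lspan d T"
  unfolding msum_def by (induction xs) (auto intro: lspan.intros)

lemma msum_cong: "(\<And>x. x \<in> set xs \<Longrightarrow> f x = g x) \<Longrightarrow> msum d f xs = msum d g xs"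
  unfolding msum_def by (induction xs) auto

lemma msum_carrier: "(\<And>x. x \<in> set xs \<Longrightarrow> f x \<in> carrier_mat d d) \<Longrightarrow> msum d f xs \<in> carrier_mat d d"
  unfolding msum_def by (induction xs) auto


locale swa =
  fixes H V :: "complex mat" and d :: nat
  assumes H_c: "H \<in> carrier_mat d d" and V_c[simp]: "V \<in> carrier_mat d d"
    and P_c[simp]: "ground_proj H \<in> carrier_mat d d" and G_c[simp]: "reduced_resolvent H \<in> carrier_mat d d"
    and PP[simp]: "ground_proj H * ground_proj H = ground_proj H"
    and PG[simp]: "ground_proj H * reduced_resolvent H = 0\<^sub>m d d"
    and GP[simp]: "reduced_resolvent H * ground_proj H = 0\<^sub>m d d"
begin

abbreviation "P \<equiv> ground_proj H"
abbreviation "G \<equiv> reduced_resolvent H"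
abbreviation "Q \<equiv> compl_proj H"
abbreviation Cd :: "complex mat set" where "Cd \<equiv> carrier_mat d d"

lemma dimH[simp]: "dim_row H = d" using H_c by simp
lemma Q_eq: "Q = 1\<^sub>m d - P" unfolding compl_proj_def by simp

lemma mc[simp]: "A \<in> Cd \<Longrightarrow> B \<in> Cd \<Longrightarrow> A * B \<in> Cd" by simp
lemma ac[simp]: "A \<in> Cd \<Longrightarrow> B \<in> Cd \<Longrightarrow> A + B \<in> Cd" by simp
lemma sc[simp]: "A \<in> Cd \<Longrightarrow> B \<in> Cd \<Longrightarrow> A - B \<in> Cd" unfolding carrier_mat_def by auto
lemma smc[simp]: "A \<in> Cd \<Longrightarrow> c \<cdot>\<^sub>m A \<in> Cd" by simp
lemma umc[simp]: "A \<in> Cd \<Longrightarrow> - A \<in> Cd" by simp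
lemma pc[simp]: "A \<in> Cd \<Longrightarrow> A ^\<^sub>m k \<in> Cd" by simp
lemma dimC: "A \<in> Cd \<Longrightarrow> dim_row A = d" "A \<in> Cd \<Longrightarrow> dim_col A = d" by auto
lemma dims[simp]: "dim_row P = d" "dim_col P = d" "dim_row G = d" "dim_col G = d" "dim_row V = d" "dim_col V = d"
  by (simp_all add: dimC)
lemma assoc[simp]: "A \<in> Cd \<Longrightarrow> B \<in> Cd \<Longrightarrow> C \<in> Cd \<Longrightarrow> A * B * C = A * (B * C)" by simp
lemma zmult1[simp]: "A \<in> Cd \<Longrightarrow> 0\<^sub>m d d * A = 0\<^sub>m d d" by (rule left_mult_zero_mat)
lemma zmult2[simp]: "A \<in> Cd \<Longrightarrow> A * 0\<^sub>m d d = 0\<^sub>m d d" by (rule right_mult_zero_mat)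
lemma omult1[simp]: "A \<in> Cd \<Longrightarrow> 1\<^sub>m d * A = A" by (rule left_mult_one_mat)
lemma omult2[simp]: "A \<in> Cd \<Longrightarrow> A * 1\<^sub>m d = A" by (rule right_mult_one_mat)
lemma dist[simp]: "A \<in> Cd \<Longrightarrow> B \<in> Cd \<Longrightarrow> C \<in> Cd \<Longrightarrow> A * (B + C) = A * B + A * C"
  "A \<in> Cd \<Longrightarrow> B \<in> Cd \<Longrightarrow> C \<in> Cd \<Longrightarrow> (A + B) * C = A * C + B * C"
  "A \<in> Cd \<Longrightarrow> B \<in> Cd \<Longrightarrow> C \<in> Cd \<Longrightarrow> A * (B - C) = A * B - A * C"
  "A \<in> Cd \<Longrightarrow> B \<in> Cd \<Longrightarrow> C \<in> Cd \<Longrightarrow> (A - B) * C = A * C - B * C"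
  by (auto simp: mult_add_distrib_mat[of _ d d] add_mult_distrib_mat[of _ d d]
      mult_minus_distrib_mat[of _ d d] minus_mult_distrib_mat[of _ d d])
lemma smdist[simp]: "A \<in> Cd \<Longrightarrow> B \<in> Cd \<Longrightarrow> A * (c \<cdot>\<^sub>m B) = c \<cdot>\<^sub>m (A * B)"
  "A \<in> Cd \<Longrightarrow> B \<in> Cd \<Longrightarrow> (c \<cdot>\<^sub>m A) * B = c \<cdot>\<^sub>m (A * B)"
  by (auto simp: mult_smult_distrib[of _ d d] mult_smult_assoc_mat[of _ d d])
lemma minus_self[simp]: "A \<in> Cd \<Longrightarrow> A - A = 0\<^sub>m d d" by (intro eq_matI) auto
lemma minus_zero[simp]: "A \<in> Cd \<Longrightarrow> A - 0\<^sub>m d d = A" by (intro eq_matI) auto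
lemma zero_minus[simp]: "A \<in> Cd \<Longrightarrow> 0\<^sub>m d d - A = - A" by (intro eq_matI) auto
lemma add_zero[simp]: "A \<in> Cd \<Longrightarrow> A + 0\<^sub>m d d = A" "A \<in> Cd \<Longrightarrow> 0\<^sub>m d d + A = A" by (intro eq_matI; auto)+

lemma Q_c[simp]: "Q \<in> Cd" unfolding Q_eq by simp

lemma PQ[simp]: "P * Q = 0\<^sub>m d d" unfolding Q_eq by (simp add: mult_minus_distrib_mat[of _ d d])
lemma QP[simp]: "Q * P = 0\<^sub>m d d" unfolding Q_eq by (simp add: minus_mult_distrib_mat[of _ d d])
lemma QG[simp]: "Q * G = G" unfolding Q_eq by (simp add: minus_mult_distrib_mat[of _ d d])
lemma GQ[simp]: "G * Q = G" unfolding Q_eq by (simp add: mult_minus_distrib_mat[of _ d d])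
lemma QQ[simp]: "Q * Q = Q" unfolding Q_eq by (simp add: mult_minus_distrib_mat[of _ d d] minus_mult_distrib_mat[of _ d d])

lemma pow_Suc': "A \<in> Cd \<Longrightarrow> A ^\<^sub>m Suc k = A * A ^\<^sub>m k"
proof (induction k)
  case 0 then show ?case by simp
next
  case (Suc k)
  have "A ^\<^sub>m Suc (Suc k) = (A * A ^\<^sub>m k) * A" using Suc by simp
  also have "\<dots> = A * (A ^\<^sub>m k * A)" using Suc by (simp del: pow_mat.simps)
  finally show ?case by (simp del: assoc)
qed

lemma pow_add: assumes AC: "A \<in> Cd" shows "A ^\<^sub>m a * A ^\<^sub>m b = A ^\<^sub>m (a + b)"
proof (induction b)
  case 0 then show ?case using AC by simp
next
  case (Suc b)
  have "A ^\<^sub>m (a + Suc b) = A ^\<^sub>m (a + b) * A" by simp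
  also have "\<dots> = (A ^\<^sub>m a * A ^\<^sub>m b) * A" by (simp only: Suc.IH)
  also have "\<dots> = A ^\<^sub>m a * A ^\<^sub>m (Suc b)" using AC by simp
  finally show ?case by (rule sym)
qed

declare pow_mat.simps(2)[simp del]
lemma G0[simp]: "G ^\<^sub>m 0 = 1\<^sub>m d" by simp

lemma PGs: "P * G ^\<^sub>m Suc k = 0\<^sub>m d d"
proof -
  have "G ^\<^sub>m Suc k = G * G ^\<^sub>m k" by (rule pow_Suc') simp
  hence "P * G ^\<^sub>m Suc k = P * (G * G ^\<^sub>m k)" by simp
  also have "\<dots> = (P * G) * G ^\<^sub>m k" by (rule assoc[symmetric]) auto
  finally show ?thesis by simp
qed

lemma GsP: "G ^\<^sub>m Suc k * P = 0\<^sub>m d d"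
proof -
  have "G ^\<^sub>m Suc k * P = G ^\<^sub>m k * (G * P)" by (simp add: pow_mat.simps(2) del: GP)
  thus ?thesis by simp
qed

definition Zset :: "complex mat set" where "Zset = insert P (range (\<lambda>m. G ^\<^sub>m m))"

lemma Zset_c: "Zset \<subseteq> Cd" unfolding Zset_def by auto

lemma Z_c: "Z \<in> Zset \<Longrightarrow> Z \<in> Cd" using Zset_c by auto

lemma Zs_c: "Z \<in> lspan d Zset \<Longrightarrow> Z \<in> Cd" using Zset_c lspan_carrier by blast

lemma Zprod: assumes "Z1 \<in> Zset" "Z2 \<in> Zset" shows "Z1 * Z2 \<in> lspan d Zset"
proof -
  have PZ: "P \<in> lspan d Zset" "\<And>m. G ^\<^sub>m m \<in> lspan d Zset"
    unfolding Zset_def by (auto intro: lspan_base)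
  { fix m :: nat
    have "P * G ^\<^sub>m m \<in> lspan d Zset"
      by (cases m) (auto simp: PGs PZ lspan_zero)
    moreover have "G ^\<^sub>m m * P \<in> lspan d Zset"
      by (cases m) (auto simp: GsP PZ lspan_zero)
    moreover have "\<And>k. G ^\<^sub>m m * G ^\<^sub>m k \<in> lspan d Zset"
      by (simp add: pow_add PZ)
    ultimately have "P * G ^\<^sub>m m \<in> lspan d Zset" "G ^\<^sub>m m * P \<in> lspan d Zset"
      "\<And>k. G ^\<^sub>m m * G ^\<^sub>m k \<in> lspan d Zset" by auto }
  then show ?thesis using assms PZ unfolding Zset_def by auto
qed

lemma one_Zset: "1\<^sub>m d \<in> Zset"
proof -
  have "G ^\<^sub>m 0 = 1\<^sub>m d" by simp
  thus ?thesis unfolding Zset_def by (metis rangeI insertI2)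
qed
lemma P_Zset: "P \<in> Zset" unfolding Zset_def by auto
lemma G_Zset: "G \<in> Zset"
proof -
  have "G ^\<^sub>m 1 = G" by (simp add: pow_mat.simps(2))
  thus ?thesis unfolding Zset_def by (metis rangeI insertI2)
qed

fun W :: "nat \<Rightarrow> complex mat set" where
  "W 0 = lspan d Zset"
| "W (Suc n) = lspan d {A * V * Z | A Z. A \<in> W n \<and> Z \<in> Zset}"

lemma W_c: "A \<in> W n \<Longrightarrow> A \<in> Cd"
proof (induction n arbitrary: A)
  case 0 then show ?case using Zs_c by simp
next
  case (Suc n)
  have "{A * V * Z | A Z. A \<in> W n \<and> Z \<in> Zset} \<subseteq> Cd" using Suc.IH Z_c by auto
  then show ?case using Suc.prems lspan_carrier by auto
qed

lemma W_closed: "x \<in> lspan d (W n) \<Longrightarrow> x \<in> W n"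
  by (cases n) (auto intro: lspan_idem)

lemma W_gen: assumes "A \<in> W a" "Y \<in> lspan d Zset" shows "A * V * Y \<in> W (Suc a)"
proof -
  have "(A * V) * Y \<in> lspan d {A * V * Z | A Z. A \<in> W a \<and> Z \<in> Zset}"
    by (rule lspan_mult_left[OF Zset_c _ _ assms(2)]) (use assms W_c in \<open>auto intro: lspan_base\<close>)
  thus ?thesis by simp
qed

lemma W_mult_Z: assumes "A \<in> W a" "Z \<in> lspan d Zset" shows "A * Z \<in> W a"
  using assms
proof (induction a arbitrary: A)
  case 0
  have "A * Z \<in> lspan d Zset"
  proof (rule lspan_mult_right[OF Zset_c Zs_c[OF 0(2)] _ ])
    show "A \<in> lspan d Zset" using 0 by simp
  next
    fix s assume s: "s \<in> Zset"
    show "s * Z \<in> lspan d Zset"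
      by (rule lspan_mult_left[OF Zset_c Z_c[OF s] _ 0(2)]) (use s Zprod in auto)
  qed
  then show ?case by simp
next
  case (Suc a)
  let ?S = "{A * V * Z | A Z. A \<in> W a \<and> Z \<in> Zset}"
  have Sc: "?S \<subseteq> Cd" using W_c Z_c by auto
  have "A * Z \<in> W (Suc a)"
  proof (rule W_closed, rule lspan_mult_right[OF Sc Zs_c[OF Suc(3)]])
    show "A \<in> lspan d ?S" using Suc by simp
  next
    fix s assume "s \<in> ?S"
    then obtain A' Z' where s: "s = A' * V * Z'" "A' \<in> W a" "Z' \<in> Zset" by auto
    have "Z' * Z \<in> lspan d Zset"
      by (rule lspan_mult_left[OF Zset_c Z_c[OF s(3)] _ Suc(3)]) (use s in \<open>auto intro: Zprod\<close>)
    then have "A' * V * (Z' * Z) \<in> W (Suc a)" using W_gen s by blast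
    moreover have "s * Z = A' * V * (Z' * Z)" using s W_c Z_c Zs_c[OF Suc(3)] by simp
    ultimately show "s * Z \<in> lspan d (W (Suc a))" by (auto intro: lspan_base)
  qed
  then show ?case .
qed

lemma W_mult: assumes "A \<in> W a" "B \<in> W b" shows "A * B \<in> W (a + b)"
  using assms(2)
proof (induction b arbitrary: B)
  case 0 then show ?case using W_mult_Z assms(1) by simp
next
  case (Suc b)
  let ?S = "{A * V * Z | A Z. A \<in> W b \<and> Z \<in> Zset}"
  have Sc: "?S \<subseteq> Cd" using W_c Z_c by auto
  show ?case
  proof (rule W_closed, rule lspan_mult_left[OF Sc W_c[OF assms(1)]])
    show "B \<in> lspan d ?S" using Suc by simp
  next
    fix s assume "s \<in> ?S"
    then obtain B' Z' where s: "s = B' * V * Z'" "B' \<in> W b" "Z' \<in> Zset" by auto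
    have "A * B' \<in> W (a + b)" using Suc.IH s by blast
    then have "A * B' * V * Z' \<in> W (Suc (a + b))" using W_gen s lspan_base by blast
    moreover have "A * s = A * B' * V * Z'" using s W_c[OF s(2)] Z_c[OF s(3)] W_c[OF assms(1)] by simp
    ultimately show "A * s \<in> lspan d (W (a + Suc b))" by (auto intro: lspan_base)
  qed
qed

lemma Z_W0: "Z \<in> Zset \<Longrightarrow> Z \<in> W 0" by (auto intro: lspan_base)
lemma one_W: "1\<^sub>m d \<in> W 0" using one_Zset Z_W0 by blast
lemma P_W: "P \<in> W 0" using P_Zset Z_W0 by blast
lemma G_W: "G \<in> W 0" using G_Zset Z_W0 by blast
lemma Q_W: "Q \<in> W 0"
proof -
  have "Q = 1\<^sub>m d + (-1) \<cdot>\<^sub>m P" unfolding Q_eq by (intro eq_matI) auto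
  thus ?thesis using one_W P_W by (simp add: lspan_add lspan_smult)
qed
lemma V_W: "V \<in> W 1"
proof -
  have "1\<^sub>m d * V * 1\<^sub>m d \<in> W (Suc 0)" using W_gen one_W one_Zset lspan_base by blast
  thus ?thesis by simp
qed

end


context swa begin

definition J :: "nat \<Rightarrow> complex mat set" where
  "J n = lspan d {A * P * B | A B. \<exists>a b. A \<in> W a \<and> B \<in> W b \<and> 1 \<le> a \<and> 1 \<le> b \<and> a + b = n}"

lemma Jg_c: "{A * P * B | A B. \<exists>a b. A \<in> W a \<and> B \<in> W b \<and> 1 \<le> a \<and> 1 \<le> b \<and> a + b = n} \<subseteq> Cd"
  using W_c by fastforce

lemma J_c: "X \<in> J n \<Longrightarrow> X \<in> Cd" unfolding J_def using Jg_c lspan_carrier by blast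

lemma J_gen: "A \<in> W a \<Longrightarrow> B \<in> W b \<Longrightarrow> 1 \<le> a \<Longrightarrow> 1 \<le> b \<Longrightarrow> n = a + b \<Longrightarrow> A * P * B \<in> J n"
  unfolding J_def by (rule lspan_base) blast

lemma J_zero: "0\<^sub>m d d \<in> J n" unfolding J_def by (rule lspan_zero)
lemma J_add: "X \<in> J n \<Longrightarrow> Y \<in> J n \<Longrightarrow> X + Y \<in> J n" unfolding J_def by (rule lspan_add)
lemma J_smult: "X \<in> J n \<Longrightarrow> c \<cdot>\<^sub>m X \<in> J n" unfolding J_def by (rule lspan_smult)
lemma J_minus: "X \<in> J n \<Longrightarrow> Y \<in> J n \<Longrightarrow> X - Y \<in> J n" unfolding J_def by (rule lspan_minus[OF Jg_c])
lemma J_uminus: "X \<in> J n \<Longrightarrow> - X \<in> J n" unfolding J_def by (rule lspan_uminus[OF Jg_c])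

lemma J_left: assumes "M \<in> W c" "X \<in> J n" "m = c + n" shows "M * X \<in> J m"
proof -
  have "M * X \<in> lspan d {A * P * B | A B. \<exists>a b. A \<in> W a \<and> B \<in> W b \<and> 1 \<le> a \<and> 1 \<le> b \<and> a + b = m}"
  proof (rule lspan_mult_left[OF Jg_c W_c[OF assms(1)]])
    show "X \<in> lspan d {A * P * B | A B. \<exists>a b. A \<in> W a \<and> B \<in> W b \<and> 1 \<le> a \<and> 1 \<le> b \<and> a + b = n}"
      using assms(2) unfolding J_def .
  next
    fix s assume "s \<in> {A * P * B | A B. \<exists>a b. A \<in> W a \<and> B \<in> W b \<and> 1 \<le> a \<and> 1 \<le> b \<and> a + b = n}"
    then obtain A B a b where s: "s = A * P * B" "A \<in> W a" "B \<in> W b" "1 \<le> a" "1 \<le> b" "a + b = n" by auto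
    have "(M * A) * P * B \<in> J m" using s assms W_mult by (intro J_gen[of _ "c + a" _ b]) auto
    moreover have "M * s = (M * A) * P * B" using s W_c assms(1) by simp
    ultimately show "M * s \<in> lspan d {A * P * B | A B. \<exists>a b. A \<in> W a \<and> B \<in> W b \<and> 1 \<le> a \<and> 1 \<le> b \<and> a + b = m}"
      unfolding J_def by simp
  qed
  thus ?thesis unfolding J_def .
qed

lemma J_right: assumes "X \<in> J n" "M \<in> W c" "m = n + c" shows "X * M \<in> J m"
proof -
  have "X * M \<in> lspan d {A * P * B | A B. \<exists>a b. A \<in> W a \<and> B \<in> W b \<and> 1 \<le> a \<and> 1 \<le> b \<and> a + b = m}"
  proof (rule lspan_mult_right[OF Jg_c W_c[OF assms(2)]])
    show "X \<in> lspan d {A * P * B | A B. \<exists>a b. A \<in> W a \<and> B \<in> W b \<and> 1 \<le> a \<and> 1 \<le> b \<and> a + b = n}"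
      using assms(1) unfolding J_def .
  next
    fix s assume "s \<in> {A * P * B | A B. \<exists>a b. A \<in> W a \<and> B \<in> W b \<and> 1 \<le> a \<and> 1 \<le> b \<and> a + b = n}"
    then obtain A B a b where s: "s = A * P * B" "A \<in> W a" "B \<in> W b" "1 \<le> a" "1 \<le> b" "a + b = n" by auto
    have "A * P * (B * M) \<in> J m" using s assms W_mult by (intro J_gen[of _ a _ "b + c"]) auto
    moreover have "s * M = A * P * (B * M)" using s W_c assms(2) by simp
    ultimately show "s * M \<in> lspan d {A * P * B | A B. \<exists>a b. A \<in> W a \<and> B \<in> W b \<and> 1 \<le> a \<and> 1 \<le> b \<and> a + b = m}"
      unfolding J_def by simp
  qed
  thus ?thesis unfolding J_def .
qed

lemma J_W: assumes "X \<in> J n" shows "X \<in> W n"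
proof -
  have "X \<in> lspan d (W n)"
  proof (rule lspan_subset[OF _ assms[unfolded J_def]])
    show "{A * P * B | A B. \<exists>a b. A \<in> W a \<and> B \<in> W b \<and> 1 \<le> a \<and> 1 \<le> b \<and> a + b = n} \<subseteq> lspan d (W n)"
    proof
      fix s assume "s \<in> {A * P * B | A B. \<exists>a b. A \<in> W a \<and> B \<in> W b \<and> 1 \<le> a \<and> 1 \<le> b \<and> a + b = n}"
      then obtain A B a b where s: "s = A * P * B" "A \<in> W a" "B \<in> W b" "a + b = n" by auto
      have "A * P \<in> W (a + 0)" using W_mult s P_W by blast
      then have "A * P * B \<in> W (a + 0 + b)" using W_mult s by blast
      then show "s \<in> lspan d (W n)" using s by (auto intro: lspan_base)
    qed
  qed
  thus ?thesis by (rule W_closed)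
qed

definition Kg :: "nat \<Rightarrow> complex mat set" where
  "Kg n = {P * A | A. A \<in> W n} \<union> {A * P | A. A \<in> W n} \<union> J n"

definition K :: "nat \<Rightarrow> complex mat set" where "K n = lspan d (Kg n)"

lemma Kg_c: "Kg n \<subseteq> Cd" unfolding Kg_def using W_c J_c by fastforce
lemma K_c: "X \<in> K n \<Longrightarrow> X \<in> Cd" unfolding K_def using Kg_c lspan_carrier by blast

lemma K_W: assumes "X \<in> K n" shows "X \<in> W n"
proof -
  have "X \<in> lspan d (W n)"
  proof (rule lspan_subset[OF _ assms[unfolded K_def]])
    show "Kg n \<subseteq> lspan d (W n)"
    proof
      fix s assume "s \<in> Kg n"
      then consider A where "s = P * A" "A \<in> W n" | A where "s = A * P" "A \<in> W n" | "s \<in> J n"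
        unfolding Kg_def by blast
      then have "s \<in> W n"
      proof cases
        case 1 then show ?thesis using W_mult[OF P_W, of A n] by simp
      next
        case 2 then show ?thesis using W_mult[OF _ P_W, of A n] by simp
      next
        case 3 then show ?thesis by (rule J_W)
      qed
      then show "s \<in> lspan d (W n)" by (rule lspan_base)
    qed
  qed
  thus ?thesis by (rule W_closed)
qed

lemma K_PA: "A \<in> W n \<Longrightarrow> P * A \<in> K n" unfolding K_def Kg_def by (rule lspan_base) blast
lemma K_AP: "A \<in> W n \<Longrightarrow> A * P \<in> K n" unfolding K_def Kg_def by (rule lspan_base) blast
lemma K_J: "X \<in> J n \<Longrightarrow> X \<in> K n" unfolding K_def Kg_def by (rule lspan_base) blast

lemma WKW: assumes A: "A \<in> W a" and x: "x \<in> K b" and C: "C \<in> W c" and a: "1 \<le> a" and c: "1 \<le> c"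
  and m: "m = a + b + c"
  shows "A * x * C \<in> J m"
proof -
  have "A * x * C \<in> lspan d {A * P * B | A B. \<exists>a b. A \<in> W a \<and> B \<in> W b \<and> 1 \<le> a \<and> 1 \<le> b \<and> a + b = m}"
  proof (rule lspan_sandwich[OF Kg_c W_c[OF A] W_c[OF C] _ x[unfolded K_def]])
    fix s assume "s \<in> Kg b"
    then consider B where "s = P * B" "B \<in> W b" | B where "s = B * P" "B \<in> W b" | "s \<in> J b"
      unfolding Kg_def by blast
    then have "A * s * C \<in> J m"
    proof cases
      case 1
      have "A * P * (B * C) \<in> J m" using 1 A C a c m W_mult by (intro J_gen[of _ a _ "b + c"]) auto
      moreover have "A * s * C = A * P * (B * C)" using 1 W_c A C by simp
      ultimately show ?thesis by simp
    next
      case 2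
      have "(A * B) * P * C \<in> J m" using 2 A C a c m W_mult by (intro J_gen[of _ "a + b" _ c]) auto
      moreover have "A * s * C = (A * B) * P * C" using 2 W_c A C by simp
      ultimately show ?thesis by simp
    next
      case 3
      have "A * s \<in> J (a + b)" using J_left[OF A 3] by simp
      then show ?thesis using J_right[OF _ C] m by simp
    qed
    then show "A * s * C \<in> lspan d {A * P * B | A B. \<exists>a b. A \<in> W a \<and> B \<in> W b \<and> 1 \<le> a \<and> 1 \<le> b \<and> a + b = m}"
      unfolding J_def by simp
  qed
  thus ?thesis unfolding J_def .
qed

definition KKg :: "nat \<Rightarrow> complex mat set" where
  "KKg n = {x * y | x y. \<exists>a b. x \<in> K a \<and> y \<in> K b \<and> 1 \<le> a \<and> 1 \<le> b \<and> a + b = n}"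
definition KK :: "nat \<Rightarrow> complex mat set" where "KK n = lspan d (KKg n)"

lemma KKg_c: "KKg n \<subseteq> Cd" unfolding KKg_def using K_c by fastforce

lemma KK_gen: "x \<in> K a \<Longrightarrow> y \<in> K b \<Longrightarrow> 1 \<le> a \<Longrightarrow> 1 \<le> b \<Longrightarrow> n = a + b \<Longrightarrow> x * y \<in> KK n"
  unfolding KK_def KKg_def by (rule lspan_base) blast

lemma K_KK_J: assumes x: "x \<in> K a" and z: "z \<in> KK b" and a: "1 \<le> a" and m: "m = a + b"
  shows "x * z \<in> J m" "z * x \<in> J m"
proof -
  have xW: "x \<in> W a" using K_W x by blast
  have "x * z * 1\<^sub>m d \<in> lspan d {A * P * B | A B. \<exists>a b. A \<in> W a \<and> B \<in> W b \<and> 1 \<le> a \<and> 1 \<le> b \<and> a + b = m}"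
  proof (rule lspan_sandwich[OF KKg_c K_c[OF x] one_carrier_mat _ z[unfolded KK_def]])
    fix s assume "s \<in> KKg b"
    then obtain y1 y2 b1 b2 where s: "s = y1 * y2" "y1 \<in> K b1" "y2 \<in> K b2" "1 \<le> b1" "1 \<le> b2" "b1 + b2 = b"
      unfolding KKg_def by blast
    have "x * y1 * y2 \<in> J m" by (rule WKW[OF xW s(2) K_W[OF s(3)] a s(5)]) (use s m in simp)
    moreover have "x * s * 1\<^sub>m d = x * y1 * y2" using s K_c x by simp
    ultimately show "x * s * 1\<^sub>m d \<in> lspan d {A * P * B | A B. \<exists>a b. A \<in> W a \<and> B \<in> W b \<and> 1 \<le> a \<and> 1 \<le> b \<and> a + b = m}"
      unfolding J_def by simp
  qed
  then show "x * z \<in> J m" unfolding J_def[symmetric] using K_c[OF x] lspan_carrier[OF KKg_c z[unfolded KK_def]] by simp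
  have "1\<^sub>m d * z * x \<in> lspan d {A * P * B | A B. \<exists>a b. A \<in> W a \<and> B \<in> W b \<and> 1 \<le> a \<and> 1 \<le> b \<and> a + b = m}"
  proof (rule lspan_sandwich[OF KKg_c one_carrier_mat K_c[OF x] _ z[unfolded KK_def]])
    fix s assume "s \<in> KKg b"
    then obtain y1 y2 b1 b2 where s: "s = y1 * y2" "y1 \<in> K b1" "y2 \<in> K b2" "1 \<le> b1" "1 \<le> b2" "b1 + b2 = b"
      unfolding KKg_def by blast
    have "y1 * y2 * x \<in> J m" by (rule WKW[OF K_W[OF s(2)] s(3) xW s(4) a]) (use s m in simp)
    moreover have "1\<^sub>m d * s * x = y1 * y2 * x" using s K_c x by simp
    ultimately show "1\<^sub>m d * s * x \<in> lspan d {A * P * B | A B. \<exists>a b. A \<in> W a \<and> B \<in> W b \<and> 1 \<le> a \<and> 1 \<le> b \<and> a + b = m}"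
      unfolding J_def by simp
  qed
  then show "z * x \<in> J m" unfolding J_def[symmetric] using K_c[OF x] lspan_carrier[OF KKg_c z[unfolded KK_def]] by simp
qed

end

declare bernoulli.simps[simp del]

lemma hatS_cong: "(\<And>i. 1 \<le> i \<Longrightarrow> i \<le> m \<Longrightarrow> S i = S' i) \<Longrightarrow> hatS d S W k m = hatS d S' W k m"
proof (induction k arbitrary: m)
  case 0 then show ?case by simp
next
  case (Suc k)
  show ?case unfolding hatS.simps
  proof (rule msum_cong)
    fix n1 assume "n1 \<in> set [1..<m+1]"
    then have n1: "1 \<le> n1" "n1 \<le> m" by auto
    have "hatS d S W k (m - n1) = hatS d S' W k (m - n1)" using Suc by auto
    then show "ad (S n1) (hatS d S W k (m - n1)) = ad (S' n1) (hatS d S' W k (m - n1))"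
      using Suc.prems n1 by simp
  qed
qed

lemma S_next_cong: "1 \<le> n \<Longrightarrow> (\<And>i. 1 \<le> i \<Longrightarrow> i < n \<Longrightarrow> S i = S' i) \<Longrightarrow> S_next H V S n = S_next H V S' n"
proof -
  assume h: "\<And>i. 1 \<le> i \<Longrightarrow> i < n \<Longrightarrow> S i = S' i" and n1: "1 \<le> n"
  show ?thesis
  proof (cases "n = 1")
    case True then show ?thesis unfolding S_next_def Let_def by simp
  next
    case False
    have h1: "S (n - 1) = S' (n - 1)" if "n \<ge> 2" using h that by simp
    have h2: "hatS d S W k (n - 1) = hatS d S' W k (n - 1)" for d W k
      by (rule hatS_cong) (use h False in auto)
    show ?thesis unfolding S_next_def Let_def using h1 h2 \<open>n \<noteq> 1\<close> n1 by simp
  qed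
qed

lemma S_list_length[simp]: "length (S_list H V n) = Suc n" by (induction n) auto

lemma S_list_nth: "i \<le> n \<Longrightarrow> S_list H V (n + k) ! i = S_list H V n ! i"
proof (induction k)
  case 0 then show ?case by simp
next
  case (Suc k)
  have "S_list H V (n + Suc k) ! i = S_list H V (n + k) ! i"
    using Suc.prems by (simp add: nth_append)
  then show ?case using Suc by simp
qed

lemma SW_S_Suc: "SW_S H V (Suc n) = S_next H V (SW_S H V) (Suc n)"
proof -
  have "SW_S H V (Suc n) = S_next H V (\<lambda>i. S_list H V n ! i) (Suc n)"
    unfolding SW_S_def by (simp add: nth_append)
  also have "\<dots> = S_next H V (SW_S H V) (Suc n)"
  proof (rule S_next_cong)
    show "1 \<le> Suc n" by simp
  next
    fix i assume i: "1 \<le> i" "i < Suc n"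
    have "S_list H V (i + (n - i)) ! i = S_list H V i ! i" by (rule S_list_nth) simp
    then show "S_list H V n ! i = SW_S H V i" unfolding SW_S_def using i by simp
  qed
  finally show ?thesis .
qed

context swa begin

abbreviation "Vd \<equiv> V_diag H V"
abbreviation "Vod \<equiv> V_offdiag H V"

lemma Vd_eq: "Vd = P * V * P + Q * V * Q" unfolding V_diag_def by simp
lemma Vod_eq: "Vod = P * V * Q + Q * V * P" unfolding V_offdiag_def by simp
lemma Vd_c[simp]: "Vd \<in> Cd" unfolding Vd_eq by simp
lemma Vod_c[simp]: "Vod \<in> Cd" unfolding Vod_eq by simp

lemma Vd_W: "Vd \<in> W 1"
proof -
  have "P * V * P \<in> W (0 + 1 + 0)" by (intro W_mult P_W V_W)
  moreover have "Q * V * Q \<in> W (0 + 1 + 0)" by (intro W_mult Q_W V_W)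
  ultimately show ?thesis unfolding Vd_eq using W_closed lspan_add lspan_base by (metis add_0 add_0_right)
qed

lemma Vod_K: "Vod \<in> K 1"
proof -
  have a: "P * (V * Q) \<in> K 1" by (rule K_PA) (use W_mult[OF V_W Q_W] in simp)
  have b: "(Q * V) * P \<in> K 1" by (rule K_AP) (use W_mult[OF Q_W V_W] in simp)
  have "Vod = P * (V * Q) + (Q * V) * P" unfolding Vod_eq by simp
  then show ?thesis using a b unfolding K_def by (simp add: lspan_add)
qed

definition lev :: "nat \<Rightarrow> nat \<Rightarrow> complex mat set" where
  "lev k n = (if k = 0 then K n else if k = 1 then KK n else J n)"

lemma hatS_lev:
  assumes "\<And>i. 1 \<le> i \<Longrightarrow> i \<le> m \<Longrightarrow> S i \<in> K i"
  shows "hatS d S Vod k m \<in> lev k (Suc m)"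
  using assms
proof (induction k arbitrary: m)
  case 0
  show ?case unfolding lev_def using Vod_K by (auto simp: K_def lspan_zero)
next
  case (Suc k)
  have trm: "ad (S n1) (hatS d S Vod k (m - n1)) \<in> lev (Suc k) (Suc m)" if n1: "n1 \<in> set [1..<m+1]" for n1
  proof -
    from n1 have n1': "1 \<le> n1" "n1 \<le> m" by auto
    have X: "hatS d S Vod k (m - n1) \<in> lev k (Suc (m - n1))" using Suc n1' by auto
    have Sn: "S n1 \<in> K n1" using Suc.prems n1' by auto
    have deg1: "Suc m = n1 + Suc (m - n1)" using n1' by arith
    have deg2: "Suc m = Suc (m - n1) + n1" using n1' by arith
    note deg = deg1 deg2
    show ?thesis
    proof (cases "k = 0")
      case True
      have XK: "hatS d S Vod k (m - n1) \<in> K (Suc (m - n1))" using X True by (simp add: lev_def)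
      have "S n1 * hatS d S Vod k (m - n1) \<in> KK (Suc m)"
        by (rule KK_gen[OF Sn XK n1'(1) _ deg1]) simp
      moreover have "hatS d S Vod k (m - n1) * S n1 \<in> KK (Suc m)"
        by (rule KK_gen[OF XK Sn _ n1'(1) deg2]) simp
      ultimately show ?thesis unfolding ad_def lev_def KK_def using True by (simp add: lspan_minus[OF KKg_c])
    next
      case False
      note k = this
      show ?thesis
      proof (cases "k = 1")
        case True
        have XK: "hatS d S Vod k (m - n1) \<in> KK (Suc (m - n1))" using X True by (simp add: lev_def)
        have "S n1 * hatS d S Vod k (m - n1) \<in> J (Suc m)" using K_KK_J(1)[OF Sn XK n1'(1) deg(1)] .
        moreover have "hatS d S Vod k (m - n1) * S n1 \<in> J (Suc m)"
          using K_KK_J(2)[OF Sn XK n1'(1) deg1] .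
        ultimately show ?thesis unfolding ad_def lev_def using True by (simp add: J_minus)
      next
        case False
        have XJ: "hatS d S Vod k (m - n1) \<in> J (Suc (m - n1))" using X False k by (simp add: lev_def)
        have SW: "S n1 \<in> W n1" using K_W Sn by blast
        have "S n1 * hatS d S Vod k (m - n1) \<in> J (Suc m)" using J_left[OF SW XJ deg(1)] .
        moreover have "hatS d S Vod k (m - n1) * S n1 \<in> J (Suc m)" using J_right[OF XJ SW deg(2)] .
        ultimately show ?thesis unfolding ad_def lev_def using k by (simp add: J_minus)
      qed
    qed
  qed
  show ?case
  proof (cases "k = 0")
    case True
    have "hatS d S Vod (Suc k) m \<in> KK (Suc m)" unfolding hatS.simps KK_def
      by (rule msum_lspan) (use trm True in \<open>auto simp: lev_def KK_def\<close>)
    then show ?thesis using True by (simp add: lev_def)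
  next
    case False
    have "hatS d S Vod (Suc k) m \<in> J (Suc m)" unfolding hatS.simps J_def
      by (rule msum_lspan) (use trm False in \<open>auto simp: lev_def J_def\<close>)
    then show ?thesis using False by (simp add: lev_def)
  qed
qed

end


context swa begin

lemma uminus_zero[simp]: "- 0\<^sub>m d d = (0\<^sub>m d d :: complex mat)" by (intro eq_matI) auto

lemma rassoc0: "A \<in> Cd \<Longrightarrow> B \<in> Cd \<Longrightarrow> Z \<in> Cd \<Longrightarrow> A * (B * Z) = (A * B) * Z" by simp

lemma PPr[simp]: "Z \<in> Cd \<Longrightarrow> P * (P * Z) = P * Z" by (simp only: rassoc0[of P P Z] P_c PP)
lemma PGr[simp]: "Z \<in> Cd \<Longrightarrow> P * (G * Z) = 0\<^sub>m d d" by (simp only: rassoc0[of P G Z] P_c G_c PG zmult1)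
lemma GPr[simp]: "Z \<in> Cd \<Longrightarrow> G * (P * Z) = 0\<^sub>m d d" by (simp only: rassoc0[of G P Z] P_c G_c GP zmult1)
lemma PQr[simp]: "Z \<in> Cd \<Longrightarrow> P * (Q * Z) = 0\<^sub>m d d" by (simp only: rassoc0[of P Q Z] P_c Q_c PQ zmult1)
lemma QPr[simp]: "Z \<in> Cd \<Longrightarrow> Q * (P * Z) = 0\<^sub>m d d" by (simp only: rassoc0[of Q P Z] P_c Q_c QP zmult1)
lemma QGr[simp]: "Z \<in> Cd \<Longrightarrow> Q * (G * Z) = G * Z" by (simp only: rassoc0[of Q G Z] G_c Q_c QG)
lemma GQr[simp]: "Z \<in> Cd \<Longrightarrow> G * (Q * Z) = G * Z" by (simp only: rassoc0[of G Q Z] G_c Q_c GQ)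
lemma QQr[simp]: "Z \<in> Cd \<Longrightarrow> Q * (Q * Z) = Q * Z" by (simp only: rassoc0[of Q Q Z] Q_c QQ)

lemma pow1[simp]: "A \<in> Cd \<Longrightarrow> A ^\<^sub>m 1 = A" by (simp add: pow_mat.simps(2))

lemma VGsP[simp]: "(V * G) ^\<^sub>m Suc k * P = 0\<^sub>m d d"
  by (simp add: pow_mat.simps(2))
lemma VGsPr[simp]: "Z \<in> Cd \<Longrightarrow> (V * G) ^\<^sub>m Suc k * (P * Z) = 0\<^sub>m d d"
  by (simp only: rassoc0[of "(V * G) ^\<^sub>m Suc k" P Z] VGsP pc mc V_c G_c P_c zmult1)
lemma VGsQ[simp]: "(V * G) ^\<^sub>m Suc k * Q = (V * G) ^\<^sub>m Suc k"
  unfolding Q_eq by simp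
lemma VGsQr[simp]: "Z \<in> Cd \<Longrightarrow> (V * G) ^\<^sub>m Suc k * (Q * Z) = (V * G) ^\<^sub>m Suc k * Z"
  by (simp only: rassoc0[of "(V * G) ^\<^sub>m Suc k" Q Z] VGsQ pc mc V_c G_c Q_c)

lemma GV_Suc: "(G * V) ^\<^sub>m Suc k = G * (V * (G * V) ^\<^sub>m k)"
  by (simp add: pow_Suc')
lemma PGVs[simp]: "P * (G * V) ^\<^sub>m Suc k = 0\<^sub>m d d" unfolding GV_Suc by simp
lemma PGVsr[simp]: "Z \<in> Cd \<Longrightarrow> P * ((G * V) ^\<^sub>m Suc k * Z) = 0\<^sub>m d d"
  by (simp only: rassoc0[of P "(G * V) ^\<^sub>m Suc k" Z] PGVs pc mc V_c G_c P_c zmult1)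
lemma QGVs[simp]: "Q * (G * V) ^\<^sub>m Suc k = (G * V) ^\<^sub>m Suc k" unfolding GV_Suc by simp
lemma QGVsr[simp]: "Z \<in> Cd \<Longrightarrow> Q * ((G * V) ^\<^sub>m Suc k * Z) = (G * V) ^\<^sub>m Suc k * Z"
  by (simp only: rassoc0[of Q "(G * V) ^\<^sub>m Suc k" Z] QGVs pc mc V_c G_c Q_c)

definition Xm :: "nat \<Rightarrow> complex mat" where "Xm n = P * (V * G) ^\<^sub>m n"
definition Ym :: "nat \<Rightarrow> complex mat" where "Ym n = (G * V) ^\<^sub>m n * P"
lemma Xm_c[simp]: "Xm n \<in> Cd" unfolding Xm_def by simp
lemma Ym_c[simp]: "Ym n \<in> Cd" unfolding Ym_def by simp

lemma VG_W: "(V * G) ^\<^sub>m n \<in> W n"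
proof (induction n)
  case 0 then show ?case using one_W by simp
next
  case (Suc n)
  have "(V * G) ^\<^sub>m n * V * G \<in> W (Suc n)" by (rule W_gen[OF Suc lspan_base[OF G_Zset]])
  moreover have "(V * G) ^\<^sub>m Suc n = (V * G) ^\<^sub>m n * V * G" by (simp add: pow_mat.simps(2))
  ultimately show ?case by simp
qed

lemma GV_W: "(G * V) ^\<^sub>m n \<in> W n"
proof (induction n)
  case 0 then show ?case using one_W by simp
next
  case (Suc n)
  have "(G * V) ^\<^sub>m n * G \<in> W n" using W_mult_Z[OF Suc lspan_base[OF G_Zset]] .
  then have "(G * V) ^\<^sub>m n * G * V * 1\<^sub>m d \<in> W (Suc n)" by (rule W_gen[OF _ lspan_base[OF one_Zset]])
  moreover have "(G * V) ^\<^sub>m Suc n = (G * V) ^\<^sub>m n * G * V * 1\<^sub>m d" by (simp add: pow_mat.simps(2))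
  ultimately show ?case by simp
qed

lemma Xm_K: "Xm n \<in> K n" unfolding Xm_def by (rule K_PA[OF VG_W])
lemma Ym_K: "Ym n \<in> K n" unfolding Ym_def by (rule K_AP[OF GV_W])

lemma VGV: "V * (G * V) ^\<^sub>m n = (V * G) ^\<^sub>m n * V"
proof (induction n)
  case 0 then show ?case by simp
next
  case (Suc n)
  have "V * (G * V) ^\<^sub>m Suc n = (V * (G * V) ^\<^sub>m n) * (G * V)" by (simp add: pow_mat.simps(2))
  also have "\<dots> = (V * G) ^\<^sub>m n * V * (G * V)" using Suc by simp
  also have "\<dots> = (V * G) ^\<^sub>m Suc n * V" by (simp add: pow_mat.simps(2))
  finally show ?case .
qed

definition ell :: "complex mat \<Rightarrow> complex mat" where "ell M = Lop P G (ad Vd M)"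

lemma ell_c[simp]: "M \<in> Cd \<Longrightarrow> ell M \<in> Cd" unfolding ell_def Lop_def ad_def by simp

lemma ell_add: "A \<in> Cd \<Longrightarrow> B \<in> Cd \<Longrightarrow> ell (A + B) = ell A + ell B"
  unfolding ell_def Lop_def ad_def by (simp, intro eq_matI, auto simp: algebra_simps)

lemma ell_J: assumes R: "R \<in> J n" and n: "m = Suc n" shows "ell R \<in> J m"
proof -
  have a: "Vd * R \<in> J (1 + n)" by (rule J_left[OF Vd_W R refl])
  have b: "R * Vd \<in> J (n + 1)" by (rule J_right[OF R Vd_W refl])
  have ab: "Vd * R - R * Vd \<in> J m" using a b n J_minus by simp
  have c: "P * (Vd * R - R * Vd) * G \<in> J m"
    using J_right[OF J_left[OF P_W ab refl] G_W refl] by simp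
  have e: "G * (Vd * R - R * Vd) * P \<in> J m"
    using J_right[OF J_left[OF G_W ab refl] P_W refl] by simp
  show ?thesis unfolding ell_def Lop_def ad_def using c e by (rule J_minus)
qed

lemma ell_X: "ell (Xm (Suc k)) = P * (V * (P * ((V * G) ^\<^sub>m Suc k * G))) - Xm (Suc (Suc k))"
proof -
  have "Xm (Suc (Suc k)) = P * ((V * G) ^\<^sub>m Suc k * (V * G))" unfolding Xm_def by (simp add: pow_mat.simps(2))
  then show ?thesis unfolding ell_def Lop_def ad_def Xm_def Vd_eq by simp
qed

lemma ell_Y: "ell (Ym (Suc k)) = - (Ym (Suc (Suc k)) - G * ((G * V) ^\<^sub>m Suc k * (P * (V * P))))"
proof -
  have "Ym (Suc (Suc k)) = G * (V * ((G * V) ^\<^sub>m Suc k * P))" unfolding Ym_def GV_Suc[of "Suc k"] by simp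
  then show ?thesis unfolding ell_def Lop_def ad_def Ym_def Vd_eq by simp
qed

end


context swa begin

declare W.simps[simp del]

lemma ell_minus: "A \<in> Cd \<Longrightarrow> B \<in> Cd \<Longrightarrow> ell (A - B) = ell A - ell B"
  unfolding ell_def Lop_def ad_def by (simp, intro eq_matI, auto simp: algebra_simps)

lemma K_add: "x \<in> K n \<Longrightarrow> y \<in> K n \<Longrightarrow> x + y \<in> K n" unfolding K_def by (rule lspan_add)
lemma K_minus: "x \<in> K n \<Longrightarrow> y \<in> K n \<Longrightarrow> x - y \<in> K n" unfolding K_def by (rule lspan_minus[OF Kg_c])

lemma XY_dim[simp]: "dim_row (Xm n) = d" "dim_col (Xm n) = d" "dim_row (Ym n) = d" "dim_col (Ym n) = d"
  using Xm_c[of n] Ym_c[of n] by (simp_all only: carrier_matD)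

lemma powS0[simp]: "A \<in> Cd \<Longrightarrow> A ^\<^sub>m Suc 0 = A" by (simp add: pow_mat.simps(2))

lemma S1: "SW_S H V 1 = Xm 1 - Ym 1"
proof -
  have "SW_S H V (Suc 0) = S_next H V (SW_S H V) (Suc 0)" by (rule SW_S_Suc)
  also have "\<dots> = Lop P G Vod" unfolding S_next_def Let_def by simp
  also have "\<dots> = Xm 1 - Ym 1" unfolding Lop_def Vod_eq Xm_def Ym_def by simp
  finally show ?thesis by simp
qed

lemma Lop_J: "X \<in> J n \<Longrightarrow> Lop P G X \<in> J n"
  unfolding Lop_def using J_right[OF J_left[OF P_W _ refl] G_W refl] J_right[OF J_left[OF G_W _ refl] P_W refl]
  by (intro J_minus) auto

lemma S_main: "1 \<le> n \<Longrightarrow> SW_S H V n \<in> Cd \<and> SW_S H V n - (Xm n - Ym n) \<in> J n"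
proof (induction n rule: less_induct)
  case (less n)
  show ?case
  proof (cases "n = 1")
    case True
    then show ?thesis using S1 J_zero by simp
  next
    case False
    then obtain k where n: "n = Suc (Suc k)" using less.prems by (cases n; cases "n - 1") auto
    define S' where "S' = SW_S H V (Suc k)"
    define R where "R = S' - (Xm (Suc k) - Ym (Suc k))"
    have IH: "S' \<in> Cd" "R \<in> J (Suc k)" using less.IH[of "Suc k"] n unfolding S'_def R_def by auto
    have SK: "SW_S H V i \<in> K i" if i: "1 \<le> i" "i \<le> Suc k" for i
    proof -
      have h: "SW_S H V i \<in> Cd" "SW_S H V i - (Xm i - Ym i) \<in> J i" using less.IH[of i] i n by auto
      have "SW_S H V i = (Xm i - Ym i) + (SW_S H V i - (Xm i - Ym i))"
        using h by (intro eq_matI) auto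
      moreover have "(Xm i - Ym i) + (SW_S H V i - (Xm i - Ym i)) \<in> K i"
        by (intro K_add K_minus Xm_K Ym_K K_J h)
      ultimately show ?thesis by simp
    qed
    define B where "B = msum d (\<lambda>j. complex_of_real (sw_a (2 * j)) \<cdot>\<^sub>m Lop P G (hatS d (SW_S H V) Vod (2 * j) (Suc k)))
              [1..<(Suc k) div 2 + 1]"
    have Sn: "SW_S H V n = - ell S' + B"
    proof -
      have "SW_S H V n = S_next H V (SW_S H V) (Suc (Suc k))" unfolding n by (rule SW_S_Suc)
      also have "\<dots> = - ell S' + B" unfolding S_next_def Let_def ell_def S'_def B_def by simp
      finally show ?thesis .
    qed
    have BJ: "B \<in> J n" unfolding B_def J_def
    proof (rule msum_lspan)
      fix j assume "j \<in> set [1..<Suc k div 2 + 1]"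
      then have j: "1 \<le> j" by auto
      have "hatS d (SW_S H V) Vod (2 * j) (Suc k) \<in> lev (2 * j) (Suc (Suc k))"
        by (rule hatS_lev) (use SK in auto)
      then have "hatS d (SW_S H V) Vod (2 * j) (Suc k) \<in> J n" using j n by (simp add: lev_def)
      then have "complex_of_real (sw_a (2 * j)) \<cdot>\<^sub>m Lop P G (hatS d (SW_S H V) Vod (2 * j) (Suc k)) \<in> J n"
        by (intro J_smult Lop_J)
      then show "complex_of_real (sw_a (2 * j)) \<cdot>\<^sub>m Lop P G (hatS d (SW_S H V) Vod (2 * j) (Suc k))
        \<in> lspan d {A * P * B | A B. \<exists>a b. A \<in> W a \<and> B \<in> W b \<and> 1 \<le> a \<and> 1 \<le> b \<and> a + b = n}"
        unfolding J_def .
    qed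
    define JX where "JX = P * (V * (P * ((V * G) ^\<^sub>m Suc k * G)))"
    define JY where "JY = G * ((G * V) ^\<^sub>m Suc k * (P * (V * P)))"
    have JXJ: "JX \<in> J n"
    proof -
      have "(P * V) * P * ((V * G) ^\<^sub>m Suc k * G) \<in> J n"
        using W_mult[OF P_W V_W] W_mult_Z[OF VG_W lspan_base[OF G_Zset]] n
        by (intro J_gen[of _ 1 _ "Suc k"]) auto
      then show ?thesis unfolding JX_def by simp
    qed
    have JYJ: "JY \<in> J n"
    proof -
      have "(G * (G * V) ^\<^sub>m Suc k) * P * (V * P) \<in> J n"
        using W_mult[OF G_W GV_W] W_mult[OF V_W P_W] n
        by (intro J_gen[of _ "Suc k" _ 1]) auto
      then show ?thesis unfolding JY_def by simp
    qed
    have eS: "ell S' = ell (Xm (Suc k)) - ell (Ym (Suc k)) + ell R"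
    proof -
      have "S' = (Xm (Suc k) - Ym (Suc k)) + R" unfolding R_def using IH by (intro eq_matI) auto
      then have "ell S' = ell ((Xm (Suc k) - Ym (Suc k)) + R)" by simp
      also have "\<dots> = ell (Xm (Suc k)) - ell (Ym (Suc k)) + ell R"
        using J_c[OF IH(2)] by (simp add: ell_add ell_minus)
      finally show ?thesis .
    qed
    have eR: "ell R \<in> J n" using ell_J[OF IH(2)] n by simp
    have Bc: "B \<in> Cd" using J_c[OF BJ] .
    have eRc: "ell R \<in> Cd" using J_c[OF eR] .
    have eX: "ell (Xm (Suc k)) = JX - Xm n" unfolding JX_def n by (rule ell_X)
    have eY: "ell (Ym (Suc k)) = - (Ym n - JY)" unfolding JY_def n by (rule ell_Y)
    have "SW_S H V n - (Xm n - Ym n) = (JY - JX) - ell R + B"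
      unfolding Sn eS eX eY
      using Bc eRc J_c[OF JXJ] J_c[OF JYJ] by (intro eq_matI) (auto simp: algebra_simps)
    moreover have "(JY - JX) - ell R + B \<in> J n" using JXJ JYJ eR BJ by (intro J_add J_minus)
    moreover have "SW_S H V n \<in> Cd" unfolding Sn using Bc IH by simp
    ultimately show ?thesis by simp
  qed
qed

lemma S_K: "1 \<le> n \<Longrightarrow> SW_S H V n \<in> K n"
proof -
  assume i: "1 \<le> n"
  have h: "SW_S H V n \<in> Cd" "SW_S H V n - (Xm n - Ym n) \<in> J n" using S_main[OF i] by auto
  have "SW_S H V n = (Xm n - Ym n) + (SW_S H V n - (Xm n - Ym n))"
    using h by (intro eq_matI) auto
  moreover have "(Xm n - Ym n) + (SW_S H V n - (Xm n - Ym n)) \<in> K n"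
    by (intro K_add K_minus Xm_K Ym_K K_J h)
  ultimately show ?thesis by simp
qed

end


lemma bern0: "bernoulli 0 = 1" by (subst bernoulli.simps) simp
lemma bern1: "bernoulli (Suc 0) = -1/2" by (subst bernoulli.simps) (simp add: bern0)
lemma bern2: "bernoulli 2 = 1/6"
  by (subst bernoulli.simps) (simp add: numeral_2_eq_2 lessThan_Suc bern0 bern1)

lemma sw_b1: "sw_b 1 = 1/2"
  by (simp add: sw_b_def bern2)

context swa begin

lemma foldr_zero: "(\<And>x. x \<in> set xs \<Longrightarrow> f x = 0\<^sub>m d d) \<Longrightarrow> z \<in> Cd \<Longrightarrow> foldr (\<lambda>i acc. f i + acc) xs z = z"
  by (induction xs) auto

lemma hatS1: assumes m: "1 \<le> m" and S: "\<And>i. 1 \<le> i \<Longrightarrow> i \<le> m \<Longrightarrow> S i \<in> Cd"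
  shows "hatS d S Vod (Suc 0) m = ad (S m) Vod"
proof -
  have up: "[1..<m+1] = [1..<m] @ [m]" using m by simp
  have Sm: "S m \<in> Cd" using S m by simp
  have "hatS d S Vod (Suc 0) m = foldr (\<lambda>i acc. ad (S i) (hatS d S Vod 0 (m - i)) + acc) [1..<m] (ad (S m) Vod + 0\<^sub>m d d)"
    unfolding hatS.simps msum_def up by simp
  also have "\<dots> = ad (S m) Vod + 0\<^sub>m d d"
  proof (rule foldr_zero)
    fix x assume "x \<in> set [1..<m]"
    then have x: "1 \<le> x" "x < m" by auto
    then have "S x \<in> Cd" using S by simp
    then show "ad (S x) (hatS d S Vod 0 (m - x)) = 0\<^sub>m d d" using x unfolding ad_def by simp
  next
    show "ad (S m) Vod + 0\<^sub>m d d \<in> Cd" using Sm unfolding ad_def by simp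
  qed
  also have "\<dots> = ad (S m) Vod" using Sm unfolding ad_def by simp
  finally show ?thesis .
qed

definition Cm :: "nat \<Rightarrow> complex mat" where "Cm m = P * ((V * G) ^\<^sub>m m * (V * P))"
lemma Cm_c[simp]: "Cm m \<in> Cd" unfolding Cm_def by simp

definition fP :: "complex mat \<Rightarrow> complex mat" where "fP M = P * ad M Vod * P"
lemma fP_c[simp]: "M \<in> Cd \<Longrightarrow> fP M \<in> Cd" unfolding fP_def ad_def by simp
lemma Cm_dim[simp]: "dim_row (Cm n) = d" "dim_col (Cm n) = d"
  using Cm_c[of n] by (simp_all only: carrier_matD)
lemma fP_dim[simp]: "M \<in> Cd \<Longrightarrow> dim_row (fP M) = d" "M \<in> Cd \<Longrightarrow> dim_col (fP M) = d"
  by (metis carrier_matD fP_c)+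
lemma fP_add: "A \<in> Cd \<Longrightarrow> B \<in> Cd \<Longrightarrow> fP (A + B) = fP A + fP B"
  unfolding fP_def ad_def by (simp, intro eq_matI, auto simp: algebra_simps)
lemma fP_minus: "A \<in> Cd \<Longrightarrow> B \<in> Cd \<Longrightarrow> fP (A - B) = fP A - fP B"
  unfolding fP_def ad_def by (simp, intro eq_matI, auto simp: algebra_simps)

lemma VGVr: "Z \<in> Cd \<Longrightarrow> V * ((G * V) ^\<^sub>m n * Z) = (V * G) ^\<^sub>m n * (V * Z)"
proof -
  assume Z: "Z \<in> Cd"
  have "V * ((G * V) ^\<^sub>m n * Z) = (V * (G * V) ^\<^sub>m n) * Z" using Z by simp
  also have "\<dots> = ((V * G) ^\<^sub>m n * V) * Z" by (simp only: VGV)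
  also have "\<dots> = (V * G) ^\<^sub>m n * (V * Z)" using Z by simp
  finally show ?thesis .
qed

lemma fP_X: "fP (Xm (Suc k)) = Cm (Suc k)"
  unfolding fP_def ad_def Xm_def Vod_eq Cm_def by simp

lemma fP_Y: "fP (Ym (Suc k)) = - Cm (Suc k)"
proof -
  have "fP (Ym (Suc k)) = - (P * (V * ((G * V) ^\<^sub>m Suc k * P)))"
    unfolding fP_def ad_def Ym_def Vod_eq by simp
  also have "\<dots> = - Cm (Suc k)" unfolding Cm_def by (simp add: VGVr)
  finally show ?thesis .
qed

lemma Vod_W: "Vod \<in> W 1" using K_W[OF Vod_K] .

lemma fP_J: assumes R: "R \<in> J m" shows "fP R \<in> J (Suc m)"
proof -
  have a: "R * Vod \<in> J (Suc m)" using J_right[OF R Vod_W] by simp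
  have b: "Vod * R \<in> J (Suc m)" using J_left[OF Vod_W R] by simp
  have "R * Vod - Vod * R \<in> J (Suc m)" using a b by (rule J_minus)
  then have "P * (R * Vod - Vod * R) * P \<in> J (Suc m)"
    using J_right[OF J_left[OF P_W _ refl] P_W refl] by simp
  then show ?thesis unfolding fP_def ad_def .
qed

lemma hatS_c: assumes "\<And>i. 1 \<le> i \<Longrightarrow> i \<le> m \<Longrightarrow> S i \<in> K i" shows "hatS d S Vod k m \<in> Cd"
proof -
  have "hatS d S Vod k m \<in> lev k (Suc m)" by (rule hatS_lev[OF assms])
  then show ?thesis unfolding lev_def KK_def
    using K_c J_c lspan_carrier[OF KKg_c] by (auto split: if_splits)
qed

lemma SK_all: "\<And>i. 1 \<le> i \<Longrightarrow> i \<le> m \<Longrightarrow> SW_S H V i \<in> K i" using S_K by blast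

lemma Heff: assumes q: "2 \<le> q"
  shows "H_eff H V q \<in> Cd \<and> H_eff H V q - Cm (q - 1) \<in> J q \<and> P * H_eff H V q * P = H_eff H V q"
proof -
  obtain m where qm: "q = Suc m" and m: "1 \<le> m" using q by (cases q) auto
  define g where "g = (\<lambda>j. complex_of_real (sw_b j) \<cdot>\<^sub>m
            (P * hatS d (SW_S H V) Vod (2 * j - 1) (q - 1) * P))"
  have Hdef: "H_eff H V q = msum d g [1..<q div 2 + 1]" unfolding H_eff_def g_def using q by simp
  have lt: "1 < q div 2 + 1" using q by auto
  have up: "[1..<q div 2 + 1] = 1 # [Suc 1..<q div 2 + 1]" by (rule upt_conv_Cons[OF lt])
  define rest where "rest = msum d g [Suc 1..<q div 2 + 1]"
  have H1: "H_eff H V q = g 1 + rest" unfolding Hdef up rest_def msum_def by simp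
  have hc: "\<And>k. hatS d (SW_S H V) Vod k m \<in> Cd" by (rule hatS_c[OF SK_all])
  have restJ: "rest \<in> J q" unfolding rest_def J_def
  proof (rule msum_lspan)
    fix j assume "j \<in> set [Suc 1..<q div 2 + 1]"
    then have j: "2 \<le> j" by auto
    have "hatS d (SW_S H V) Vod (2 * j - 1) m \<in> lev (2 * j - 1) (Suc m)"
      by (rule hatS_lev[OF SK_all])
    moreover have ne: "2 * j - 1 \<noteq> 1" "2 * j - 1 \<noteq> 0" using j by arith+
    ultimately have "hatS d (SW_S H V) Vod (2 * j - 1) m \<in> J q" using qm by (simp add: lev_def)
    then have "P * hatS d (SW_S H V) Vod (2 * j - 1) m * P \<in> J q"
      using J_right[OF J_left[OF P_W _ refl] P_W refl] by simp
    then have "g j \<in> J q" unfolding g_def using qm by (simp add: J_smult)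
    then show "g j \<in> lspan d {A * P * B | A B. \<exists>a b. A \<in> W a \<and> B \<in> W b \<and> 1 \<le> a \<and> 1 \<le> b \<and> a + b = q}"
      unfolding J_def .
  qed
  obtain k where mk: "m = Suc k" using m by (cases m) auto
  have SM: "SW_S H V m \<in> Cd" "SW_S H V m - (Xm m - Ym m) \<in> J m" using S_main[OF m] by auto
  define R where "R = SW_S H V m - (Xm m - Ym m)"
  have Rc: "R \<in> Cd" using SM unfolding R_def by simp
  have g1: "g 1 = complex_of_real (1/2) \<cdot>\<^sub>m fP (SW_S H V m)"
    unfolding g_def fP_def sw_b1 using qm hatS1[OF m, of "SW_S H V"] S_main by simp
  have fS: "fP (SW_S H V m) = Cm m + Cm m + fP R"
  proof -
    have "SW_S H V m = (Xm m - Ym m) + R" unfolding R_def using SM by (intro eq_matI) auto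
    then have "fP (SW_S H V m) = fP (Xm m) - fP (Ym m) + fP R" using Rc by (simp add: fP_add fP_minus)
    also have "\<dots> = Cm m + Cm m + fP R" unfolding mk fP_X fP_Y using Rc by (intro eq_matI) auto
    finally show ?thesis .
  qed
  have fRJ: "fP R \<in> J q" using fP_J[of R m] SM qm unfolding R_def by simp
  have Hc: "H_eff H V q \<in> Cd" using H1 J_c[OF restJ] g1 fS Rc by simp
  have "H_eff H V q - Cm (q - 1) = complex_of_real (1/2) \<cdot>\<^sub>m fP R + rest"
    unfolding H1 g1 fS using qm J_c[OF restJ] Rc by (intro eq_matI) (auto simp: algebra_simps)
  moreover have "complex_of_real (1/2) \<cdot>\<^sub>m fP R + rest \<in> J q" using fRJ restJ by (intro J_add J_smult)
  ultimately have HJ: "H_eff H V q - Cm (q - 1) \<in> J q" by simp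
  have "P * H_eff H V q * P = H_eff H V q"
  proof -
    have "P * msum d g xs * P = msum d g xs" for xs
    proof (induction xs)
      case Nil then show ?case unfolding msum_def by simp
    next
      case (Cons x xs)
      have gc: "g x \<in> Cd" unfolding g_def using hc qm by simp
      have mc': "msum d g xs \<in> Cd" by (rule msum_carrier) (use hc qm in \<open>simp add: g_def\<close>)
      have "P * g x * P = g x" unfolding g_def using hc qm by simp
      then show ?case using Cons gc mc' unfolding msum_def by simp
    qed
    then show ?thesis unfolding Hdef .
  qed
  then show ?thesis using Hc HJ by simp
qed

end


context swa begin

definition chainL :: "complex mat list \<Rightarrow> complex mat" where
  "chainL Zs = foldl (\<lambda>acc Z. acc * Z * V) (P * V) Zs"

lemma chainL_snoc: "chainL (Zs @ [Z]) = chainL Zs * Z * V" unfolding chainL_def by simp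

lemma chainL_c: "set Zs \<subseteq> Cd \<Longrightarrow> chainL Zs \<in> Cd"
  by (induction Zs rule: rev_induct) (auto simp: chainL_snoc simp del: assoc, simp add: chainL_def)

lemma chain_span: "A \<in> W a \<Longrightarrow> P * A * V \<in> lspan d {chainL Zs | Zs. length Zs = a \<and> set Zs \<subseteq> Zset}"
proof (induction a arbitrary: A)
  case 0
  have "A \<in> lspan d Zset" using 0 by (simp add: W.simps)
  then show ?case
  proof (rule lspan_sandwich[OF Zset_c P_c V_c, rotated])
    fix s assume s: "s \<in> Zset"
    have c0: "chainL [] \<in> lspan d {chainL Zs | Zs. length Zs = 0 \<and> set Zs \<subseteq> Zset}"
      by (rule lspan_base) auto
    from s consider "s = P" | m where "s = G ^\<^sub>m m" unfolding Zset_def by auto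
    then show "P * s * V \<in> lspan d {chainL Zs | Zs. length Zs = 0 \<and> set Zs \<subseteq> Zset}"
    proof cases
      case 1 then show ?thesis using c0 unfolding chainL_def by simp
    next
      case 2
      show ?thesis
      proof (cases m)
        case 0 then show ?thesis using c0 2 unfolding chainL_def by simp
      next
        case (Suc k)
        have "P * s * V = 0\<^sub>m d d" using 2 Suc PGs by simp
        then show ?thesis by (simp add: lspan_zero)
      qed
    qed
  qed
next
  case (Suc a)
  let ?S = "{A * V * Z | A Z. A \<in> W a \<and> Z \<in> Zset}"
  have Sc: "?S \<subseteq> Cd" using W_c Z_c by auto
  have "A \<in> lspan d ?S" using Suc.prems by (simp add: W.simps)
  then show ?case
  proof (rule lspan_sandwich[OF Sc P_c V_c, rotated])
    fix s assume "s \<in> ?S"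
    then obtain A' Z where s: "s = A' * V * Z" "A' \<in> W a" "Z \<in> Zset" by auto
    have ih: "P * A' * V \<in> lspan d {chainL Zs | Zs. length Zs = a \<and> set Zs \<subseteq> Zset}" using Suc.IH s by blast
    have cc: "{chainL Zs | Zs. length Zs = a \<and> set Zs \<subseteq> Zset} \<subseteq> Cd" using chainL_c Zset_c by blast
    have "(P * A' * V) * (Z * V) \<in> lspan d {chainL Zs | Zs. length Zs = Suc a \<and> set Zs \<subseteq> Zset}"
    proof (rule lspan_mult_right[OF cc _ _ ih])
      show "Z * V \<in> Cd" using Z_c[OF s(3)] by simp
    next
      fix t assume "t \<in> {chainL Zs | Zs. length Zs = a \<and> set Zs \<subseteq> Zset}"
      then obtain Zs where t: "t = chainL Zs" "length Zs = a" "set Zs \<subseteq> Zset" by auto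
      have "t * (Z * V) = chainL (Zs @ [Z])" unfolding t chainL_snoc
        using chainL_c[of Zs] t Zset_c Z_c[OF s(3)] by auto
      moreover have "length (Zs @ [Z]) = Suc a" "set (Zs @ [Z]) \<subseteq> Zset" using t s by auto
      ultimately show "t * (Z * V) \<in> lspan d {chainL Zs | Zs. length Zs = Suc a \<and> set Zs \<subseteq> Zset}"
        by (intro lspan_base) blast
    qed
    moreover have "P * s * V = (P * A' * V) * (Z * V)" using s W_c Z_c by simp
    ultimately show "P * s * V \<in> lspan d {chainL Zs | Zs. length Zs = Suc a \<and> set Zs \<subseteq> Zset}" by simp
  qed
qed

lemma lspanP: assumes "X \<in> lspan d {P}" shows "\<exists>c. X = c \<cdot>\<^sub>m P"
  using assms
proof (induction rule: lspan.induct)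
  case lspan_zero
  have "0\<^sub>m d d = 0 \<cdot>\<^sub>m P" by (intro eq_matI) auto
  then show ?case by blast
next
  case (lspan_base x)
  then have "x = 1 \<cdot>\<^sub>m P" by (intro eq_matI) auto
  then show ?case by blast
next
  case (lspan_add x y)
  then obtain a b where "x = a \<cdot>\<^sub>m P" "y = b \<cdot>\<^sub>m P" by auto
  then have "x + y = (a + b) \<cdot>\<^sub>m P" by (intro eq_matI) (auto simp: algebra_simps)
  then show ?case by blast
next
  case (lspan_smult x c)
  then obtain a where "x = a \<cdot>\<^sub>m P" by auto
  then have "c \<cdot>\<^sub>m x = (c * a) \<cdot>\<^sub>m P" by (intro eq_matI) auto
  then show ?case by blast
qed

lemma spanP_c: "{P} \<subseteq> Cd" by simp

context
  fixes L :: nat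
  assumes hyp: "\<forall>n. 1 \<le> n \<and> n < L \<longrightarrow> (\<forall>Zs. length Zs = n - 1 \<and> set Zs \<subseteq> Z_choices H \<longrightarrow>
            in_span_P P (V_chain P V Zs))"
begin

lemma Zset_choices: "Zset \<subseteq> Z_choices H" unfolding Zset_def Z_choices_def by auto

lemma PAVP: assumes A: "A \<in> W a" and aL: "Suc a < L" shows "P * A * V * P \<in> lspan d {P}"
proof -
  have cc: "{chainL Zs | Zs. length Zs = a \<and> set Zs \<subseteq> Zset} \<subseteq> Cd" using chainL_c Zset_c by blast
  show ?thesis
  proof (rule lspan_mult_right[OF cc P_c _ chain_span[OF A]])
    fix t assume "t \<in> {chainL Zs | Zs. length Zs = a \<and> set Zs \<subseteq> Zset}"
    then obtain Zs where t: "t = chainL Zs" "length Zs = a" "set Zs \<subseteq> Zset" by auto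
    have "in_span_P P (V_chain P V Zs)" using hyp t aL Zset_choices by auto
    then obtain c where "V_chain P V Zs = c \<cdot>\<^sub>m P" unfolding in_span_P_def by auto
    moreover have "V_chain P V Zs = t * P" unfolding V_chain_def t chainL_def ..
    ultimately show "t * P \<in> lspan d {P}" by (auto intro: lspan_smult lspan_base)
  qed
qed

lemma PAP: assumes A: "A \<in> W a" and a1: "1 \<le> a" and aL: "a < L" shows "P * A * P \<in> lspan d {P}"
proof -
  obtain a' where a: "a = Suc a'" using a1 by (cases a) auto
  let ?S = "{A * V * Z | A Z. A \<in> W a' \<and> Z \<in> Zset}"
  have Sc: "?S \<subseteq> Cd" using W_c Z_c by auto
  have "A \<in> lspan d ?S" using A a by (simp add: W.simps)
  then show ?thesis
  proof (rule lspan_sandwich[OF Sc P_c P_c, rotated])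
    fix s assume "s \<in> ?S"
    then obtain A' Z where s: "s = A' * V * Z" "A' \<in> W a'" "Z \<in> Zset" by auto
    have pavp: "P * A' * V * P \<in> lspan d {P}" using PAVP[OF s(2)] aL a by simp
    from s(3) consider "Z = P" | m where "Z = G ^\<^sub>m m" unfolding Zset_def by auto
    then show "P * s * P \<in> lspan d {P}"
    proof cases
      case 1 then show ?thesis using pavp s W_c by simp
    next
      case 2
      show ?thesis
      proof (cases m)
        case 0 then show ?thesis using pavp s 2 W_c by simp
      next
        case (Suc k)
        have "P * s * P = 0\<^sub>m d d" using s 2 Suc GsP W_c by simp
        then show ?thesis by (simp add: lspan_zero)
      qed
    qed
  qed
qed

lemma PJP: assumes X: "X \<in> J n" and nL: "n \<le> L" shows "P * X * P \<in> lspan d {P}"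
proof (rule lspan_sandwich[OF Jg_c P_c P_c _ X[unfolded J_def]])
  fix s assume "s \<in> {A * P * B | A B. \<exists>a b. A \<in> W a \<and> B \<in> W b \<and> 1 \<le> a \<and> 1 \<le> b \<and> a + b = n}"
  then obtain A B a b where s: "s = A * P * B" "A \<in> W a" "B \<in> W b" "1 \<le> a" "1 \<le> b" "a + b = n" by auto
  have a: "P * A * P \<in> lspan d {P}" using PAP[OF s(2) s(4)] s nL by simp
  have b: "P * B * P \<in> lspan d {P}" using PAP[OF s(3) s(5)] s nL by simp
  have "(P * A * P) * (P * B * P) \<in> lspan d {P}"
    by (rule lspan_mult2[OF spanP_c spanP_c _ a b]) (auto intro: lspan_base)
  moreover have "P * s * P = (P * A * P) * (P * B * P)" using s W_c by simp
  ultimately show "P * s * P \<in> lspan d {P}" by simp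
qed

lemma Cm_span: assumes "Suc m < L" shows "Cm m \<in> lspan d {P}"
proof -
  have "P * (V * G) ^\<^sub>m m * V * P \<in> lspan d {P}" by (rule PAVP[OF VG_W assms])
  then show ?thesis unfolding Cm_def by simp
qed

lemma Heff_span: assumes q: "2 \<le> q" "q \<le> L" shows "\<exists>c. H_eff H V q - Cm (q - 1) = c \<cdot>\<^sub>m P"
proof -
  have h: "H_eff H V q \<in> Cd" "H_eff H V q - Cm (q - 1) \<in> J q" "P * H_eff H V q * P = H_eff H V q"
    using Heff[OF q(1)] by auto
  have "P * Cm (q - 1) * P = Cm (q - 1)" unfolding Cm_def by simp
  then have "P * (H_eff H V q - Cm (q - 1)) * P = H_eff H V q - Cm (q - 1)" using h(1,3) by simp
  moreover have "P * (H_eff H V q - Cm (q - 1)) * P \<in> lspan d {P}" by (rule PJP[OF h(2) q(2)])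
  ultimately show ?thesis using lspanP by metis
qed

lemma main_swa: assumes L2: "L \<ge> 2"
  shows "H_eff H V 1 = P * V * P
    \<and> in_span_P P (H_eff H V 1)
    \<and> (\<forall>q. 2 \<le> q \<and> q < L \<longrightarrow> in_span_P P (H_eff H V q))
    \<and> (\<exists>c. H_eff H V L = P * ((V * G) ^\<^sub>m (L - 1)) * V * P + c \<cdot>\<^sub>m P)"
proof (intro conjI allI impI)
  show H1: "H_eff H V 1 = P * V * P" unfolding H_eff_def by simp
  have "P * 1\<^sub>m d * V * P \<in> lspan d {P}" by (rule PAVP[OF one_W]) (use L2 in simp)
  then show "in_span_P P (H_eff H V 1)" unfolding H1 in_span_P_def using lspanP by simp
next
  fix q assume q: "2 \<le> q \<and> q < L"
  obtain c where c: "H_eff H V q - Cm (q - 1) = c \<cdot>\<^sub>m P" using Heff_span q by fastforce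
  obtain e where e: "Cm (q - 1) = e \<cdot>\<^sub>m P" using Cm_span[of "q - 1"] q lspanP by fastforce
  have Hc: "H_eff H V q \<in> Cd" using Heff q by auto
  have "H_eff H V q = (H_eff H V q - Cm (q - 1)) + Cm (q - 1)" using Hc by (intro eq_matI) auto
  also have "\<dots> = c \<cdot>\<^sub>m P + e \<cdot>\<^sub>m P" unfolding c by (simp only: e)
  also have "\<dots> = (c + e) \<cdot>\<^sub>m P" by (intro eq_matI) (auto simp: algebra_simps)
  finally show "in_span_P P (H_eff H V q)" unfolding in_span_P_def by blast
next
  obtain c where c: "H_eff H V L - Cm (L - 1) = c \<cdot>\<^sub>m P" using Heff_span L2 by fastforce
  have Hc: "H_eff H V L \<in> Cd" using Heff L2 by auto
  have "H_eff H V L = Cm (L - 1) + (H_eff H V L - Cm (L - 1))" using Hc by (intro eq_matI) auto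
  also have "\<dots> = Cm (L - 1) + c \<cdot>\<^sub>m P" unfolding c ..
  also have "\<dots> = P * ((V * G) ^\<^sub>m (L - 1)) * V * P + c \<cdot>\<^sub>m P" unfolding Cm_def by simp
  finally show "\<exists>c. H_eff H V L = P * ((V * G) ^\<^sub>m (L - 1)) * V * P + c \<cdot>\<^sub>m P" by blast
qed

end

end


lemma kernel_orth_list:
  fixes A :: "complex mat"
  assumes A: "A \<in> carrier_mat d d"
  shows "\<exists>us. set us \<subseteq> carrier_vec d \<and> corthogonal us \<and>
     (\<forall>v \<in> carrier_vec d. A *\<^sub>v v = 0\<^sub>v d \<longleftrightarrow> (\<exists>c. v = mat_of_cols d us *\<^sub>v vec (length us) c))"
proof -
  interpret K: kernel d d A using A by unfold_locales
  obtain B where fB: "finite B" and bB: "K.basis B" using kernel_basis_exists[OF A] by blast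
  have BK: "B \<subseteq> mat_kernel A" and spB: "K.span B = mat_kernel A" and ind: "\<not> K.lin_dep B"
    using bB unfolding K.Ker.basis_def by auto
  have spB': "K.NC.span B = mat_kernel A" using spB K.span_same[OF BK] by simp
  have ind': "\<not> K.NC.lin_dep B" using ind K.lindep_same[OF BK] by simp
  obtain ws where ws: "set ws = B" "distinct ws" using finite_distinct_list[OF fB] by blast
  interpret C: cof_vec_space d "TYPE(complex)" .
  have Bc: "B \<subseteq> carrier_vec d" using BK mat_kernel[OF A] by auto
  define us where "us = gram_schmidt d ws"
  note gs = C.gram_schmidt_result[OF _ ws(2) _ us_def]
  have gs1: "K.NC.span (set ws) = K.NC.span (set us)" "corthogonal us" "set us \<subseteq> carrier_vec d"
    using gs Bc ws ind' by auto
  have dimus: "\<forall>w\<in>set us. dim_vec w = d" using gs1(3) by auto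
  show ?thesis
  proof (intro exI conjI ballI)
    show "set us \<subseteq> carrier_vec d" "corthogonal us" using gs1 by auto
  next
    fix v :: "complex vec" assume v: "v \<in> carrier_vec d"
    have "A *\<^sub>v v = 0\<^sub>v d \<longleftrightarrow> v \<in> mat_kernel A" using v A unfolding mat_kernel_def by auto
    also have "\<dots> \<longleftrightarrow> v \<in> K.NC.span (set us)" using spB' gs1 ws by simp
    also have "\<dots> \<longleftrightarrow> v \<in> K.NC.span_list us" using K.NC.span_list_as_span[OF gs1(3)] by simp
    also have "\<dots> \<longleftrightarrow> (\<exists>c. v = mat_of_cols d us *\<^sub>v vec (length us) c)"
    proof
      assume "v \<in> K.NC.span_list us"
      then obtain c where "v = K.NC.lincomb_list c us" by (auto elim: K.NC.in_span_listE)
      then show "\<exists>c. v = mat_of_cols d us *\<^sub>v vec (length us) c"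
        using K.NC.lincomb_list_as_mat_mult[OF dimus, of c] by auto
    next
      assume "\<exists>c. v = mat_of_cols d us *\<^sub>v vec (length us) c"
      then obtain c where "v = mat_of_cols d us *\<^sub>v vec (length us) c" by blast
      then have "v = K.NC.lincomb_list c us" using K.NC.lincomb_list_as_mat_mult[OF dimus, of c] by auto
      then show "v \<in> K.NC.span_list us" by (intro K.NC.in_span_listI) auto
    qed
    finally show "A *\<^sub>v v = 0\<^sub>v d \<longleftrightarrow> (\<exists>c. v = mat_of_cols d us *\<^sub>v vec (length us) c)" .
  qed
qed


lemma adj_dim[simp]: "dim_row (mat_adjoint A) = dim_col A" "dim_col (mat_adjoint A) = dim_row A"
  unfolding mat_adjoint_def by auto

lemma adj_index[simp]: "i < dim_col A \<Longrightarrow> j < dim_row A \<Longrightarrow> mat_adjoint (A :: complex mat) $$ (i,j) = cnj (A $$ (j,i))"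
  unfolding mat_adjoint_def by (simp add: mat_of_rows_index)

lemma adj_carrier: "A \<in> carrier_mat n m \<Longrightarrow> mat_adjoint (A :: complex mat) \<in> carrier_mat m n"
  unfolding carrier_mat_def by simp

lemma adj_adj[simp]: "mat_adjoint (mat_adjoint (A :: complex mat)) = A"
  by (intro eq_matI) auto

lemma adj_mult: assumes A: "(A :: complex mat) \<in> carrier_mat n k" and B: "B \<in> carrier_mat k m"
  shows "mat_adjoint (A * B) = mat_adjoint B * mat_adjoint A"
proof (intro eq_matI)
  fix i j assume ij: "i < dim_row (mat_adjoint B * mat_adjoint A)" "j < dim_col (mat_adjoint B * mat_adjoint A)"
  then have i: "i < m" and j: "j < n" using A B by auto
  have "mat_adjoint (A * B) $$ (i, j) = cnj (\<Sum>l<k. A $$ (j, l) * B $$ (l, i))"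
    using i j A B by (simp add: scalar_prod_def row_def col_def lessThan_atLeast0)
  also have "\<dots> = (\<Sum>l<k. cnj (B $$ (l, i)) * cnj (A $$ (j, l)))"
    by (simp add: cnj_sum mult.commute)
  also have "\<dots> = (mat_adjoint B * mat_adjoint A) $$ (i, j)"
    using i j A B by (simp add: scalar_prod_def row_def col_def lessThan_atLeast0)
  finally show "mat_adjoint (A * B) $$ (i, j) = (mat_adjoint B * mat_adjoint A) $$ (i, j)" .
qed (use A B in auto)

lemma mat_eq_vec: assumes A: "(A :: complex mat) \<in> carrier_mat n m" and B: "B \<in> carrier_mat n m"
  and h: "\<And>v. v \<in> carrier_vec m \<Longrightarrow> A *\<^sub>v v = B *\<^sub>v v" shows "A = B"
proof (intro eq_matI)
  fix i j assume "i < dim_row B" "j < dim_col B"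
  then have i: "i < n" and j: "j < m" using B by auto
  have "A $$ (i,j) = (A *\<^sub>v unit_vec m j) $ i" using A i j by (simp add: row_def)
  also have "\<dots> = (B *\<^sub>v unit_vec m j) $ i" using h[of "unit_vec m j"] by simp
  also have "\<dots> = B $$ (i,j)" using B i j by (simp add: row_def)
  finally show "A $$ (i,j) = B $$ (i,j)" .
qed (use A B in auto)

lemma orth_proj_exists:
  fixes A :: "complex mat"
  assumes A: "A \<in> carrier_mat d d"
  shows "\<exists>P. P \<in> carrier_mat d d \<and> P * P = P \<and> mat_adjoint P = P \<and>
     (\<forall>v \<in> carrier_vec d. P *\<^sub>v v = v \<longleftrightarrow> A *\<^sub>v v = 0\<^sub>v d)"
proof -
  obtain us where us: "set us \<subseteq> carrier_vec d" "corthogonal us"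
    and kern: "\<And>v. v \<in> carrier_vec d \<Longrightarrow> A *\<^sub>v v = 0\<^sub>v d \<longleftrightarrow> (\<exists>c. v = mat_of_cols d us *\<^sub>v vec (length us) c)"
    using kernel_orth_list[OF A] by blast
  define m where "m = length us"
  define U where "U = mat_of_cols d us"
  have Uc: "U \<in> carrier_mat d m" unfolding U_def m_def by simp
  define Uh where "Uh = mat_adjoint U"
  have Uhc: "Uh \<in> carrier_mat m d" unfolding Uh_def using adj_carrier[OF Uc] .
  define N where "N = Uh * U"
  have Nc: "N \<in> carrier_mat m m" unfolding N_def using Uhc Uc by simp
  have Nidx: "N $$ (k, l) = us ! l \<bullet>c us ! k" if "k < m" "l < m" for k l
  proof -
    have ukc: "us ! k \<in> carrier_vec d" "us ! l \<in> carrier_vec d" using us that m_def by auto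
    have "N $$ (k, l) = (\<Sum>j\<in>{0..<d}. Uh $$ (k, j) * U $$ (j, l))"
      using that Uc Uhc unfolding N_def by (simp add: scalar_prod_def row_def col_def)
    also have "\<dots> = (\<Sum>j\<in>{0..<d}. cnj (us ! k $ j) * us ! l $ j)"
      using that Uc unfolding Uh_def by (intro sum.cong refl) (simp add: U_def mat_of_cols_def m_def)
    finally have "N $$ (k, l) = (\<Sum>j<d. cnj (us ! k $ j) * us ! l $ j)" by (simp add: lessThan_atLeast0)
    also have "\<dots> = us ! l \<bullet>c us ! k" using ukc
      by (simp add: scalar_prod_def lessThan_atLeast0 mult.commute)
    finally show ?thesis .
  qed
  have N0: "N $$ (k, l) = 0" if "k < m" "l < m" "k \<noteq> l" for k l
    using Nidx[OF that(1,2)] us(2) that m_def by (auto simp: corthogonal_def)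
  have Nnz: "N $$ (k, k) \<noteq> 0" if "k < m" for k
    using Nidx[OF that that] us(2) that m_def by (auto simp: corthogonal_def)
  have Nreal: "cnj (N $$ (k, k)) = N $$ (k, k)" if "k < m" for k
  proof -
    have ukc: "us ! k \<in> carrier_vec d" using us that m_def by auto
    show ?thesis unfolding Nidx[OF that that] using ukc
      by (simp add: scalar_prod_def cnj_sum mult.commute)
  qed
  define Dinv where "Dinv = mat m m (\<lambda>(k,l). if k = l then inverse (N $$ (k,k)) else 0)"
  have Dc: "Dinv \<in> carrier_mat m m" unfolding Dinv_def by simp
  have DN: "Dinv * N = 1\<^sub>m m"
  proof (intro eq_matI)
    fix k l assume kl: "k < dim_row (1\<^sub>m m)" "l < dim_col (1\<^sub>m m)"
    then have k: "k < m" and l: "l < m" by auto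
    have "(Dinv * N) $$ (k, l) = (\<Sum>j\<in>{0..<m}. (if k = j then inverse (N $$ (k,k)) else 0) * N $$ (j, l))"
      using k l Nc unfolding Dinv_def by (simp add: scalar_prod_def row_def col_def)
    also have "\<dots> = (\<Sum>j\<in>{0..<m}. if k = j then inverse (N $$ (k,k)) * N $$ (k, l) else 0)"
      by (rule sum.cong) auto
    also have "\<dots> = inverse (N $$ (k,k)) * N $$ (k, l)" using k by simp
    also have "\<dots> = 1\<^sub>m m $$ (k, l)" using k l N0 Nnz by (cases "k = l") auto
    finally show "(Dinv * N) $$ (k, l) = 1\<^sub>m m $$ (k, l)" .
  qed (use Dc Nc in auto)
  have Dadj: "mat_adjoint Dinv = Dinv"
    by (intro eq_matI) (use Nreal in \<open>auto simp: Dinv_def\<close>)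
  define P where "P = U * Dinv * Uh"
  have Pc: "P \<in> carrier_mat d d" unfolding P_def using Uc Dc Uhc by simp
  have DUc: "Dinv * Uh \<in> carrier_mat m d" using Dc Uhc by simp
  have P2: "P = U * (Dinv * Uh)" unfolding P_def by (rule assoc_mult_mat[OF Uc Dc Uhc])
  have PU: "P * U = U"
  proof -
    have "P * U = U * (Dinv * (Uh * U))" unfolding P2
      by (simp only: assoc_mult_mat[OF Uc DUc Uc] assoc_mult_mat[OF Dc Uhc Uc])
    also have "\<dots> = U" unfolding N_def[symmetric] DN using Uc by simp
    finally show ?thesis .
  qed
  have PP: "P * P = P"
  proof -
    have "P * P = P * (U * (Dinv * Uh))" by (simp only: P2[symmetric])
    also have "\<dots> = (P * U) * (Dinv * Uh)" by (rule assoc_mult_mat[OF Pc Uc DUc, symmetric])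
    also have "\<dots> = P" unfolding PU by (rule P2[symmetric])
    finally show ?thesis .
  qed
  have Padj: "mat_adjoint P = P"
  proof -
    have "mat_adjoint P = mat_adjoint Uh * mat_adjoint (U * Dinv)"
      unfolding P_def by (rule adj_mult[of _ d m _ d]) (use Uc Dc Uhc in auto)
    also have "\<dots> = U * (mat_adjoint Dinv * mat_adjoint U)"
      unfolding Uh_def by (simp add: adj_mult[OF Uc Dc])
    also have "\<dots> = P" unfolding P_def Dadj Uh_def[symmetric] using Uc Dc Uhc by simp
    finally show ?thesis .
  qed
  show ?thesis
  proof (intro exI conjI ballI)
    fix v :: "complex vec" assume v: "v \<in> carrier_vec d"
    show "P *\<^sub>v v = v \<longleftrightarrow> A *\<^sub>v v = 0\<^sub>v d"
    proof
      assume Pv: "P *\<^sub>v v = v"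
      define w where "w = (Dinv * Uh) *\<^sub>v v"
      have wc: "w \<in> carrier_vec m" unfolding w_def using Dc Uhc v by simp
      have "v = U *\<^sub>v w" unfolding w_def using Pv[symmetric] unfolding P2
        using assoc_mult_mat_vec[OF Uc DUc v] by simp
      also have "w = vec (length us) (\<lambda>k. w $ k)" using wc m_def by (intro eq_vecI) auto
      finally show "A *\<^sub>v v = 0\<^sub>v d" using kern[OF v] U_def by blast
    next
      assume "A *\<^sub>v v = 0\<^sub>v d"
      then obtain c where c: "v = U *\<^sub>v vec (length us) c" using kern[OF v] U_def by blast
      have "P *\<^sub>v v = (P * U) *\<^sub>v vec (length us) c" unfolding c using Pc Uc m_def by simp
      then show "P *\<^sub>v v = v" unfolding PU c .
    qed
  qed (use Pc PP Padj in auto)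
qed


lemma vec_minus_zero: "(x :: complex vec) \<in> carrier_vec n \<Longrightarrow> y \<in> carrier_vec n \<Longrightarrow> x - y = 0\<^sub>v n \<longleftrightarrow> x = y"
  by (auto simp: vec_eq_iff)

lemma smult_one_mult_vec: assumes v: "v \<in> carrier_vec n" shows "(c \<cdot>\<^sub>m 1\<^sub>m n) *\<^sub>v v = c \<cdot>\<^sub>v (v :: complex vec)"
proof (intro eq_vecI)
  fix i assume "i < dim_vec (c \<cdot>\<^sub>v v)"
  then have i: "i < n" using v by simp
  have "((c \<cdot>\<^sub>m 1\<^sub>m n) *\<^sub>v v) $ i = (\<Sum>j\<in>{0..<n}. (c \<cdot>\<^sub>m 1\<^sub>m n) $$ (i, j) * v $ j)"
    using i v by (simp add: scalar_prod_def row_def)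
  also have "\<dots> = (\<Sum>j\<in>{0..<n}. if i = j then c * v $ j else 0)" using i by (intro sum.cong) auto
  also have "\<dots> = (c \<cdot>\<^sub>v v) $ i" using i v by simp
  finally show "((c \<cdot>\<^sub>m 1\<^sub>m n) *\<^sub>v v) $ i = (c \<cdot>\<^sub>v v) $ i" .
qed (use v in auto)

lemma zero_mat_mult_vec: "(v :: complex vec) \<in> carrier_vec m \<Longrightarrow> 0\<^sub>m n m *\<^sub>v v = 0\<^sub>v n"
  by (intro eq_vecI) (auto simp: scalar_prod_def row_def)

lemma mat_mult_zero_vec: "(A :: complex mat) \<in> carrier_mat n m \<Longrightarrow> A *\<^sub>v 0\<^sub>v m = 0\<^sub>v n"
  by (intro eq_vecI) (auto simp: scalar_prod_def row_def)

lemma adj_zero[simp]: "mat_adjoint (0\<^sub>m n m :: complex mat) = 0\<^sub>m m n" by (intro eq_matI) auto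

lemma spectral_facts:
  fixes H :: "complex mat"
  assumes Hc: "H \<in> carrier_mat d d" and Hh: "hermitian_mat H"
  shows "ground_proj H \<in> carrier_mat d d \<and> ground_proj H * ground_proj H = ground_proj H
    \<and> reduced_resolvent H \<in> carrier_mat d d
    \<and> ground_proj H * reduced_resolvent H = 0\<^sub>m d d
    \<and> reduced_resolvent H * ground_proj H = 0\<^sub>m d d"
proof -
  note asc = assoc_mult_mat[of _ d d _ d _ d]
  have dH: "dim_row H = d" using Hc by simp
  have Hadj: "mat_adjoint H = H" using Hh unfolding hermitian_mat_def by simp
  have Hent: "cnj (H $$ (j, i)) = H $$ (i, j)" if "i < d" "j < d" for i j
  proof -
    have "mat_adjoint H $$ (i, j) = cnj (H $$ (j, i))" using that Hc by simp
    then show ?thesis using Hadj by simp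
  qed
  define E where "E = complex_of_real (ground_energy H)"
  define A where "A = E \<cdot>\<^sub>m 1\<^sub>m d - H"
  have Ac: "A \<in> carrier_mat d d" unfolding A_def using Hc by (simp add: minus_carrier_mat)
  have Aadj: "mat_adjoint A = A"
    by (intro eq_matI) (use Hc Hent in \<open>auto simp: A_def E_def\<close>)
  have Av: "A *\<^sub>v v = 0\<^sub>v d \<longleftrightarrow> H *\<^sub>v v = E \<cdot>\<^sub>v v" if v: "v \<in> carrier_vec d" for v
  proof -
    have "A *\<^sub>v v = E \<cdot>\<^sub>v v - H *\<^sub>v v" unfolding A_def
      using v Hc by (simp add: minus_mult_distrib_mat_vec[of _ d d] smult_one_mult_vec)
    then show ?thesis using v Hc vec_minus_zero[of "E \<cdot>\<^sub>v v" d "H *\<^sub>v v"] by auto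
  qed
  obtain P0 where P0c: "P0 \<in> carrier_mat d d" and P0P0: "P0 * P0 = P0" and P0adj: "mat_adjoint P0 = P0"
    and P0v: "\<And>v. v \<in> carrier_vec d \<Longrightarrow> P0 *\<^sub>v v = v \<longleftrightarrow> A *\<^sub>v v = 0\<^sub>v d"
    using orth_proj_exists[OF Ac] by blast
  have P0H: "P0 *\<^sub>v v = v \<longleftrightarrow> H *\<^sub>v v = E \<cdot>\<^sub>v v" if "v \<in> carrier_vec d" for v
    using P0v[OF that] Av[OF that] by simp
  have fixP: "P0 *\<^sub>v (P0 *\<^sub>v v) = P0 *\<^sub>v v" if "v \<in> carrier_vec d" for v
    using P0P0 P0c that by (metis assoc_mult_mat_vec)
  have gp: "ground_proj H = P0"
    unfolding ground_proj_def dH E_def[symmetric]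
  proof (rule the_equality)
    show "P0 \<in> carrier_mat d d \<and> P0 * P0 = P0 \<and> mat_adjoint P0 = P0 \<and>
      (\<forall>v\<in>carrier_vec d. (P0 *\<^sub>v v = v) = (H *\<^sub>v v = E \<cdot>\<^sub>v v))" using P0c P0P0 P0adj P0H by auto
  next
    fix X assume X: "X \<in> carrier_mat d d \<and> X * X = X \<and> mat_adjoint X = X \<and>
      (\<forall>v\<in>carrier_vec d. (X *\<^sub>v v = v) = (H *\<^sub>v v = E \<cdot>\<^sub>v v))"
    have Xc: "X \<in> carrier_mat d d" and Xadj: "mat_adjoint X = X" using X by auto
    have fixX: "X *\<^sub>v (X *\<^sub>v v) = X *\<^sub>v v" if "v \<in> carrier_vec d" for v
      using X that by (metis assoc_mult_mat_vec)
    have XP: "X * P0 = P0"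
    proof (rule mat_eq_vec[of _ d d])
      fix v :: "complex vec" assume v: "v \<in> carrier_vec d"
      have "H *\<^sub>v (P0 *\<^sub>v v) = E \<cdot>\<^sub>v (P0 *\<^sub>v v)" using P0H[of "P0 *\<^sub>v v"] fixP[OF v] v P0c by simp
      then have "X *\<^sub>v (P0 *\<^sub>v v) = P0 *\<^sub>v v" using X v P0c by simp
      then show "(X * P0) *\<^sub>v v = P0 *\<^sub>v v" using Xc P0c v by simp
    qed (use Xc P0c in auto)
    have PX: "P0 * X = X"
    proof (rule mat_eq_vec[of _ d d])
      fix v :: "complex vec" assume v: "v \<in> carrier_vec d"
      have "H *\<^sub>v (X *\<^sub>v v) = E \<cdot>\<^sub>v (X *\<^sub>v v)" using X fixX[OF v] v Xc by auto
      then have "P0 *\<^sub>v (X *\<^sub>v v) = X *\<^sub>v v" using P0H v Xc by simp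
      then show "(P0 * X) *\<^sub>v v = X *\<^sub>v v" using Xc P0c v by simp
    qed (use Xc P0c in auto)
    have "X = mat_adjoint (P0 * X)" using PX Xadj by simp
    also have "\<dots> = mat_adjoint X * mat_adjoint P0" by (rule adj_mult[OF P0c Xc])
    also have "\<dots> = P0" unfolding Xadj P0adj XP ..
    finally show "X = P0" .
  qed
  have AP: "A * P0 = 0\<^sub>m d d"
  proof (rule mat_eq_vec[of _ d d])
    fix v :: "complex vec" assume v: "v \<in> carrier_vec d"
    have "A *\<^sub>v (P0 *\<^sub>v v) = 0\<^sub>v d" using P0v[of "P0 *\<^sub>v v"] fixP[OF v] v P0c by simp
    then show "(A * P0) *\<^sub>v v = 0\<^sub>m d d *\<^sub>v v" using Ac P0c v by (simp add: zero_mat_mult_vec)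
  qed (use Ac P0c in auto)
  have PA: "P0 * A = 0\<^sub>m d d"
  proof -
    have "mat_adjoint (P0 * A) = mat_adjoint A * mat_adjoint P0" by (rule adj_mult[OF P0c Ac])
    also have "\<dots> = 0\<^sub>m d d" unfolding Aadj P0adj AP ..
    finally have "mat_adjoint (mat_adjoint (P0 * A)) = mat_adjoint (0\<^sub>m d d :: complex mat)" by simp
    then show ?thesis by simp
  qed
  define B where "B = A + P0"
  have Bc: "B \<in> carrier_mat d d" unfolding B_def using Ac P0c by simp
  have Binj: "v = 0\<^sub>v d" if v: "v \<in> carrier_vec d" and Bv: "B *\<^sub>v v = 0\<^sub>v d" for v
  proof -
    have e1: "A *\<^sub>v v + P0 *\<^sub>v v = 0\<^sub>v d" using Bv unfolding B_def using Ac P0c v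
      by (simp add: add_mult_distrib_mat_vec)
    have "P0 *\<^sub>v (A *\<^sub>v v + P0 *\<^sub>v v) = (P0 * A) *\<^sub>v v + (P0 * P0) *\<^sub>v v"
      using Ac P0c v by (simp add: mult_add_distrib_mat_vec)
    then have "P0 *\<^sub>v v = 0\<^sub>v d" using e1 P0P0 PA P0c v by (simp add: zero_mat_mult_vec mat_mult_zero_vec)
    then have "A *\<^sub>v v = 0\<^sub>v d" using e1 Ac v by simp
    then have "P0 *\<^sub>v v = v" using P0v v by simp
    then show ?thesis using \<open>P0 *\<^sub>v v = 0\<^sub>v d\<close> by simp
  qed
  have "det B \<noteq> 0" using det_0_iff_vec_prod_zero[OF Bc] Binj by blast
  from det_non_zero_imp_unit[OF Bc this, of undefined]
  obtain Bi where Bic: "Bi \<in> carrier_mat d d" and BiB: "Bi * B = 1\<^sub>m d" and BBi: "B * Bi = 1\<^sub>m d"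
    unfolding Units_def ring_mat_def by auto
  have BP: "B * P0 = P0" unfolding B_def using Ac P0c AP P0P0 by (simp add: add_mult_distrib_mat)
  have PB: "P0 * B = P0" unfolding B_def using Ac P0c PA P0P0 by (simp add: mult_add_distrib_mat)
  have BiP: "Bi * P0 = P0"
  proof -
    have "Bi * P0 = Bi * (B * P0)" unfolding BP ..
    also have "\<dots> = (Bi * B) * P0" using Bic Bc P0c by simp
    finally show ?thesis using BiB P0c by simp
  qed
  have PBi: "P0 * Bi = P0"
  proof -
    have "P0 * Bi = (P0 * B) * Bi" unfolding PB ..
    also have "\<dots> = P0 * (B * Bi)" using Bic Bc P0c by simp
    finally show ?thesis using BBi P0c by simp
  qed
  have OP: "1\<^sub>m d - P0 \<in> carrier_mat d d" using P0c by (simp add: minus_carrier_mat)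
  define G0 where "G0 = (1\<^sub>m d - P0) * Bi"
  have G0c: "G0 \<in> carrier_mat d d" unfolding G0_def using OP Bic by simp
  have P0Q: "P0 * (1\<^sub>m d - P0) = 0\<^sub>m d d"
    unfolding mult_minus_distrib_mat[OF P0c one_carrier_mat P0c] using P0c P0P0 by simp
  have QP0: "(1\<^sub>m d - P0) * P0 = 0\<^sub>m d d"
    unfolding minus_mult_distrib_mat[OF one_carrier_mat P0c P0c] using P0c P0P0 by simp
  have QQ: "(1\<^sub>m d - P0) * (1\<^sub>m d - P0) = 1\<^sub>m d - P0"
  proof -
    have "(1\<^sub>m d - P0) * (1\<^sub>m d - P0) = 1\<^sub>m d * (1\<^sub>m d - P0) - P0 * (1\<^sub>m d - P0)"
      by (rule minus_mult_distrib_mat[OF one_carrier_mat P0c OP])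
    also have "\<dots> = (1\<^sub>m d - P0) - 0\<^sub>m d d" unfolding P0Q using left_mult_one_mat[OF OP] by simp
    also have "\<dots> = 1\<^sub>m d - P0" using OP P0c by (intro eq_matI) auto
    finally show ?thesis .
  qed
  have G0P: "G0 * P0 = 0\<^sub>m d d"
  proof -
    have "G0 * P0 = (1\<^sub>m d - P0) * (Bi * P0)" unfolding G0_def using OP P0c Bic by simp
    also have "\<dots> = 0\<^sub>m d d" unfolding BiP QP0 ..
    finally show ?thesis .
  qed
  have PG0: "P0 * G0 = 0\<^sub>m d d"
  proof -
    have "P0 * G0 = (P0 * (1\<^sub>m d - P0)) * Bi" unfolding G0_def using OP P0c Bic by simp
    also have "\<dots> = 0\<^sub>m d d" unfolding P0Q using Bic by simp
    finally show ?thesis .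
  qed
  have BiA: "Bi * A = 1\<^sub>m d - P0"
  proof -
    have "A = B - P0" unfolding B_def using Ac P0c by (intro eq_matI) auto
    then have "Bi * A = Bi * B - Bi * P0" using mult_minus_distrib_mat[OF Bic Bc P0c] by simp
    then show ?thesis unfolding BiB BiP .
  qed
  have G0A: "G0 * A = 1\<^sub>m d - P0"
  proof -
    have "G0 * A = (1\<^sub>m d - P0) * (Bi * A)" unfolding G0_def using OP P0c Bic Ac by simp
    also have "\<dots> = 1\<^sub>m d - P0" unfolding BiA QQ ..
    finally show ?thesis .
  qed
  have cp: "compl_proj H = 1\<^sub>m d - P0" unfolding compl_proj_def dH gp ..
  have rr: "reduced_resolvent H = G0"
    unfolding reduced_resolvent_def dH gp cp E_def[symmetric] A_def[symmetric]
  proof (rule the_equality)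
    show "G0 \<in> carrier_mat d d \<and> G0 * P0 = 0\<^sub>m d d \<and> P0 * G0 = 0\<^sub>m d d \<and> G0 * A = 1\<^sub>m d - P0"
      using G0c G0P PG0 G0A by auto
  next
    fix Y assume Y: "Y \<in> carrier_mat d d \<and> Y * P0 = 0\<^sub>m d d \<and> P0 * Y = 0\<^sub>m d d \<and> Y * A = 1\<^sub>m d - P0"
    have Yc: "Y \<in> carrier_mat d d" using Y by simp
    have YB: "Y * B = 1\<^sub>m d - P0" unfolding B_def mult_add_distrib_mat[OF Yc Ac P0c] using Y OP by simp
    have "Y = Y * (B * Bi)" unfolding BBi using Yc by simp
    also have "\<dots> = (Y * B) * Bi" using Yc Bc Bic by simp
    finally show "Y = G0" unfolding YB G0_def .
  qed
  show ?thesis unfolding gp rr using P0c P0P0 G0c PG0 G0P by simp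
qed


theorem theorem2:
  fixes H0 V :: "complex mat" and d L :: nat
  assumes "H0 \<in> carrier_mat d d" and "V \<in> carrier_mat d d"
    and "hermitian_mat H0" and "hermitian_mat V"
    and "L \<ge> 2"
    and "\<forall>n. 1 \<le> n \<and> n < L \<longrightarrow> (\<forall>Zs. length Zs = n - 1 \<and> set Zs \<subseteq> Z_choices H0 \<longrightarrow>
            in_span_P (ground_proj H0) (V_chain (ground_proj H0) V Zs))"
  shows "H_eff H0 V 1 = ground_proj H0 * V * ground_proj H0
    \<and> in_span_P (ground_proj H0) (H_eff H0 V 1)
    \<and> (\<forall>q. 2 \<le> q \<and> q < L \<longrightarrow> in_span_P (ground_proj H0) (H_eff H0 V q))
    \<and> (\<exists>c. H_eff H0 V L = ground_proj H0 * ((V * reduced_resolvent H0) ^\<^sub>m (L - 1)) * V * ground_proj H0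
              + c \<cdot>\<^sub>m ground_proj H0)"
proof -
  have sf: "ground_proj H0 \<in> carrier_mat d d \<and> ground_proj H0 * ground_proj H0 = ground_proj H0
    \<and> reduced_resolvent H0 \<in> carrier_mat d d
    \<and> ground_proj H0 * reduced_resolvent H0 = 0\<^sub>m d d
    \<and> reduced_resolvent H0 * ground_proj H0 = 0\<^sub>m d d"
    by (rule spectral_facts[OF assms(1,3)])
  interpret S: swa H0 V d using assms(1,2) sf by unfold_locales auto
  show ?thesis by (rule S.main_swa[OF assms(6) assms(5)])
qed

end
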